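(* Let $\Sigma$ be a language consisting only of $0$-ary and unary predicate symbols, containing at least one unary predicate symbol, and let $\mathcal{T}_\Sigma$ be the family of all complete theories in $\Sigma$. If $\Sigma$ consists of $k\in\omega$ unary predicate symbols and $m\in\omega$ $0$-ary predicate symbols, then ${\rm RS}(\mathcal{T}_\Sigma)=2^k$ and ${\rm ds}(\mathcal{T}_\Sigma)=2^m$. If $\Sigma$ has infinitely many symbols, then ${\rm RS}(\mathcal{T}_\Sigma)=\infty$.
   Context: Theories are complete consistent first-order theories; structures have nonempty universes. For a family $\mathcal{T}$ of theories and a sentence $\varphi$ of its language, $\mathcal{T}_\varphi=\{T\in\mathcal{T}\mid\varphi\in T\}$. The rank ${\rm RS}$ of a family is defined as follows: ${\rm RS}(\emptyset)=-1$; ${\rm RS}(\mathcal{T})=0$ for finite nonempty $\mathcal{T}$; ${\rm RS}(\mathcal{T})\ge 1$ for infinite $\mathcal{T}$; for $\alpha=\beta+1$, ${\rm RS}(\mathcal{T})\ge\alpha$ iff there are pairwise inconsistent sentences $\varphi_n$, $n\in\omega$, of the language of $\mathcal{T}$ with ${\rm RS}(\mathcal{T}_{\varphi_n})\ge\beta$ for all $n$; for limit $\alpha$, ${\rm RS}(\mathcal{T})\ge\alpha$ iff ${\rm RS}(\mathcal{T})\ge\beta$ for all $\beta<\alpha$; ${\rm RS}(\mathcal{T})=\alpha$ iff ${\rm RS}(\mathcal{T})\ge\alpha$ and not ${\rm RS}(\mathcal{T})\ge\alpha+1$; ${\rm RS}(\mathcal{T})=\infty$ if ${\rm RS}(\mathcal{T})\ge\alpha$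 for every ordinal $\alpha$. If ${\rm RS}(\mathcal{T})=\alpha$ is an ordinal $\ge0$, the degree ${\rm ds}(\mathcal{T})$ is the maximal number of pairwise inconsistent sentences $\varphi_i$ with ${\rm RS}(\mathcal{T}_{\varphi_i})=\alpha$. *)

theory Defs
  imports Main
begin

text \<open>A language Sigma is given by a set Z of 0-ary predicate symbols and a set U of
unary predicate symbols (both subsets of a symbol type 's).  Variables are natural numbers.\<close>

datatype 's fm =
    Prop 's
  | Pred 's nat
  | Eq nat nat
  | Neg "'s fm"
  | Conj "'s fm" "'s fm"
  | Ex nat "'s fm"

fun freevars :: "'s fm \<Rightarrow> nat set" where
  "freevars (Prop p) = {}"
| "freevars (Pred P x) = {x}"
| "freevars (Eq x y) = {x, y}"
| "freevars (Neg f) = freevars f"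
| "freevars (Conj f g) = freevars f \<union> freevars g"
| "freevars (Ex x f) = freevars f - {x}"

fun in_lang :: "'s set \<Rightarrow> 's set \<Rightarrow> 's fm \<Rightarrow> bool" where
  "in_lang Z U (Prop p) = (p \<in> Z)"
| "in_lang Z U (Pred P x) = (P \<in> U)"
| "in_lang Z U (Eq x y) = True"
| "in_lang Z U (Neg f) = in_lang Z U f"
| "in_lang Z U (Conj f g) = (in_lang Z U f \<and> in_lang Z U g)"
| "in_lang Z U (Ex x f) = in_lang Z U f"

definition sentences :: "'s set \<Rightarrow> 's set \<Rightarrow> 's fm set" where
  "sentences Z U = {f. in_lang Z U f \<and> freevars f = {}}"

text \<open>Structures: a universe D (a set of elements of type 's \<times> nat), an interpretation of
0-ary predicates as truth values and of unary predicates as subsets of D.  The element type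
's \<times> nat has cardinality at least |Sigma| + aleph_0, so by downward Loewenheim-Skolem every
consistent theory of the language has a model of this form.\<close>

type_synonym 's struct = "('s \<times> nat) set \<times> ('s \<Rightarrow> bool) \<times> ('s \<Rightarrow> 's \<times> nat \<Rightarrow> bool)"

definition is_struct :: "'s struct \<Rightarrow> bool" where
  "is_struct M \<longleftrightarrow> fst M \<noteq> {}"

fun sat :: "'s struct \<Rightarrow> (nat \<Rightarrow> 's \<times> nat) \<Rightarrow> 's fm \<Rightarrow> bool" where
  "sat (D, P0, P1) e (Prop p) = P0 p"
| "sat (D, P0, P1) e (Pred P x) = P1 P (e x)"
| "sat (D, P0, P1) e (Eq x y) = (e x = e y)"
| "sat (D, P0, P1) e (Neg f) = (\<not> sat (D, P0, P1) e f)"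
| "sat (D, P0, P1) e (Conj f g) = (sat (D, P0, P1) e f \<and> sat (D, P0, P1) e g)"
| "sat (D, P0, P1) e (Ex x f) = (\<exists>a\<in>D. sat (D, P0, P1) (e(x := a)) f)"

definition models :: "'s struct \<Rightarrow> 's fm \<Rightarrow> bool" where
  "models M f \<longleftrightarrow> (\<forall>e. range e \<subseteq> fst M \<longrightarrow> sat M e f)"

definition complete_theory :: "'s set \<Rightarrow> 's set \<Rightarrow> 's fm set \<Rightarrow> bool" where
  "complete_theory Z U T \<longleftrightarrow>
     T \<subseteq> sentences Z U
   \<and> (\<exists>M. is_struct M \<and> (\<forall>g\<in>T. models M g))
   \<and> (\<forall>f\<in>sentences Z U. f \<in> T \<or> Neg f \<in> T)
   \<and> (\<forall>f\<in>sentences Z U.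
        (\<forall>M. is_struct M \<longrightarrow> (\<forall>g\<in>T. models M g) \<longrightarrow> models M f) \<longrightarrow> f \<in> T)"

definition all_theories :: "'s set \<Rightarrow> 's set \<Rightarrow> 's fm set set" where
  "all_theories Z U = {T. complete_theory Z U T}"

definition restr :: "'s fm set set \<Rightarrow> 's fm \<Rightarrow> 's fm set set" where
  "restr F f = {T \<in> F. f \<in> T}"

definition inconsistent2 :: "'s fm \<Rightarrow> 's fm \<Rightarrow> bool" where
  "inconsistent2 f g \<longleftrightarrow> \<not> (\<exists>M. is_struct M \<and> models M f \<and> models M g)"

text \<open>One step of the recursive definition of "RS(F) \<ge> a".  The least element plays the
role of 0, its immediate successor the role of 1.\<close>

definition is_least :: "'o::wellorder \<Rightarrow> bool" where
  "is_least a \<longleftrightarrow> (\<forall>b. a \<le> b)"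

definition is_succ_of :: "'o::wellorder \<Rightarrow> 'o \<Rightarrow> bool" where
  "is_succ_of a b \<longleftrightarrow> b < a \<and> \<not> (\<exists>c. b < c \<and> c < a)"

definition rs_step ::
  "'s set \<Rightarrow> 's set \<Rightarrow> ('o::wellorder \<Rightarrow> 's fm set set \<Rightarrow> bool) \<Rightarrow> 'o \<Rightarrow> 's fm set set \<Rightarrow> bool" where
  "rs_step Z U R a F =
    (if is_least a then F \<noteq> {}
     else if (\<exists>b. is_least b \<and> is_succ_of a b) then infinite F
     else if (\<exists>b. is_succ_of a b) then
       (\<exists>\<phi>::nat \<Rightarrow> 's fm. (\<forall>n. \<phi> n \<in> sentences Z U)
          \<and> (\<forall>i j. i \<noteq> j \<longrightarrow> inconsistent2 (\<phi> i) (\<phi> j))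
          \<and> (\<forall>n. R (THE b. is_succ_of a b) (restr F (\<phi> n))))
     else (\<forall>b<a. R b F))"

definition rs_ge :: "'s set \<Rightarrow> 's set \<Rightarrow> 's fm set set \<Rightarrow> 'o::wellorder \<Rightarrow> bool" where
  "rs_ge Z U F a = wfrec {(b, c). b < c} (rs_step Z U) a F"

definition rs_eq :: "'s set \<Rightarrow> 's set \<Rightarrow> 's fm set set \<Rightarrow> nat \<Rightarrow> bool" where
  "rs_eq Z U F n \<longleftrightarrow> rs_ge Z U F n \<and> \<not> rs_ge Z U F (Suc n)"

definition ds_eq :: "'s set \<Rightarrow> 's set \<Rightarrow> 's fm set set \<Rightarrow> nat \<Rightarrow> bool" where
  "ds_eq Z U F d \<longleftrightarrow> (\<exists>n. rs_eq Z U F n \<and>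
     (\<exists>\<Phi>. finite \<Phi> \<and> card \<Phi> = d \<and> \<Phi> \<subseteq> sentences Z U
        \<and> (\<forall>f\<in>\<Phi>. \<forall>g\<in>\<Phi>. f \<noteq> g \<longrightarrow> inconsistent2 f g)
        \<and> (\<forall>f\<in>\<Phi>. rs_eq Z U (restr F f) n))
   \<and> (\<forall>\<Phi>. \<Phi> \<subseteq> sentences Z U
        \<and> (\<forall>f\<in>\<Phi>. \<forall>g\<in>\<Phi>. f \<noteq> g \<longrightarrow> inconsistent2 f g)
        \<and> (\<forall>f\<in>\<Phi>. rs_eq Z U (restr F f) n)
        \<longrightarrow> finite \<Phi> \<and> card \<Phi> \<le> d))"

end

theory Submission
  imports Defs
begin

lemma succ_unique:
  fixes a :: "'o::wellorder"
  assumes "is_succ_of a b" shows "(THE b. is_succ_of a b) = b"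
proof (rule the_equality)
  show "is_succ_of a b" by (rule assms)
  fix c assume c: "is_succ_of a c"
  then have "\<not> c < b" "\<not> b < c" using assms unfolding is_succ_of_def by blast+
  then show "c = b" using linorder_less_linear by blast
qed

lemma rs_step_cong:
  fixes a :: "'o::wellorder"
  assumes "\<And>b. b < a \<Longrightarrow> R b = R' b"
  shows "rs_step Z U R a F = rs_step Z U R' a F"
proof (cases "\<exists>b. is_succ_of a b")
  case True
  then obtain b where b: "is_succ_of a b" by blast
  then have "b < a" by (simp add: is_succ_of_def)
  then have "R (THE b. is_succ_of a b) = R' (THE b. is_succ_of a b)"
    using succ_unique[OF b] assms by simp
  note eqR = this
  have e: "(\<exists>b. is_succ_of a b) = True" using True by simp
  show ?thesis unfolding rs_step_def e if_True eqR by (rule refl)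
next
  case False
  have eqL: "(\<forall>b<a. R b F) = (\<forall>b<a. R' b F)" using assms by simp
  have e: "(\<exists>b. is_succ_of a b) = False" using False by simp
  show ?thesis unfolding rs_step_def e if_False eqL by (rule refl)
qed
lemma rs_ge_unfold:
  "rs_ge Z U F a = rs_step Z U (\<lambda>b G. rs_ge Z U G b) a F"
proof -
  have "rs_ge Z U F a = rs_step Z U (cut (wfrec {(b, c). b < c} (rs_step Z U)) {(b, c). b < c} a) a F"
    unfolding rs_ge_def by (subst wfrec[OF wf], rule refl)
  also have "\<dots> = rs_step Z U (\<lambda>b G. rs_ge Z U G b) a F"
    by (rule rs_step_cong) (simp add: cut_apply rs_ge_def[abs_def])
  finally show ?thesis .
qed

lemma rs_ge_0: "rs_ge Z U F (0::nat) \<longleftrightarrow> F \<noteq> {}"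
  by (subst rs_ge_unfold) (simp add: rs_step_def is_least_def)

lemma succ_nat: "is_succ_of (a::nat) b \<longleftrightarrow> a = Suc b"
  unfolding is_succ_of_def by (auto simp: not_less_eq) 

lemma least_nat: "is_least (a::nat) \<longleftrightarrow> a = 0"
proof
  assume "is_least a" then have "a \<le> 0" unfolding is_least_def by blast
  then show "a = 0" by simp
qed (simp add: is_least_def)

lemma rs_ge_1: "rs_ge Z U F (Suc 0) \<longleftrightarrow> infinite F"
  by (subst rs_ge_unfold) (simp add: rs_step_def least_nat succ_nat)

lemma rs_ge_SS: "rs_ge Z U F (Suc (Suc n)) \<longleftrightarrow>
  (\<exists>\<phi>::nat \<Rightarrow> 's fm. (\<forall>n. \<phi> n \<in> sentences Z U)
          \<and> (\<forall>i j. i \<noteq> j \<longrightarrow> inconsistent2 (\<phi> i) (\<phi> j))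
          \<and> (\<forall>i. rs_ge Z U (restr F (\<phi> i)) (Suc n)))"
proof -
  have f1: "\<not> is_least (Suc (Suc n))" by (auto simp: is_least_def)
  have f2: "\<not> (\<exists>b. is_least b \<and> is_succ_of (Suc (Suc n)) b)"
    by (auto simp: is_least_def succ_nat)
  have f3: "(THE b. is_succ_of (Suc (Suc n)) b) = Suc n"
    by (simp add: succ_nat)
  have f4: "\<exists>b. is_succ_of (Suc (Suc n)) b" by (simp add: succ_nat)
  have "rs_step Z U (\<lambda>b G. rs_ge Z U G b) (Suc (Suc n)) F = 
   (\<exists>\<phi>::nat \<Rightarrow> 's fm. (\<forall>n. \<phi> n \<in> sentences Z U)
          \<and> (\<forall>i j. i \<noteq> j \<longrightarrow> inconsistent2 (\<phi> i) (\<phi> j))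
          \<and> (\<forall>i. rs_ge Z U (restr F (\<phi> i)) (Suc n)))"
    unfolding rs_step_def
    apply (subst if_not_P, fact f1)
    apply (subst if_not_P, fact f2)
    apply (subst if_P, fact f4)
    apply (simp only: f3)
    done
  then show ?thesis using rs_ge_unfold by metis
qed


lemma sat_coinc:
  "(\<And>x. x \<in> freevars f \<Longrightarrow> e x = e' x) \<Longrightarrow> sat (D, A, B) e f = sat (D, A, B) e' f"
proof (induction f arbitrary: e e')
  case (Ex x f)
  have "\<And>a. sat (D, A, B) (e(x := a)) f = sat (D, A, B) (e'(x := a)) f"
    by (rule Ex.IH) (use Ex.prems in auto)
  then show ?case by simp
next
  case (Neg f) 
  have "sat (D, A, B) e f = sat (D, A, B) e' f" by (rule Neg.IH) (use Neg.prems in simp)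
  then show ?case by simp
next
  case (Conj f g)
  have "sat (D, A, B) e f = sat (D, A, B) e' f" by (rule Conj.IH(1)) (use Conj.prems in simp)
  moreover have "sat (D, A, B) e g = sat (D, A, B) e' g" by (rule Conj.IH(2)) (use Conj.prems in simp)
  ultimately show ?case by simp
next
  case (Prop p) show ?case by simp
next
  case (Pred P x) show ?case using Pred by simp
next
  case (Eq x y) show ?case using Eq by simp
qed
lemma sat_sentence:
  "freevars f = {} \<Longrightarrow> sat M e f = sat M e' f"
proof -
  assume fv: "freevars f = {}"
  obtain D A B where M: "M = (D, A, B)" by (cases M)
  show ?thesis unfolding M by (rule sat_coinc) (use fv in simp)
qed

lemma models_iff:
  fixes M :: "'s struct" and e :: "nat \<Rightarrow> 's \<times> nat"
  assumes "is_struct M" "freevars f = {}" "range e \<subseteq> fst M"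
  shows "models M f \<longleftrightarrow> sat M e f"
proof
  assume "models M f" then show "sat M e f" using assms(3) unfolding models_def by blast
next
  assume s: "sat M e f"
  show "models M f" unfolding models_def
  proof (intro allI impI)
    fix e' :: "nat \<Rightarrow> 's \<times> nat"
    assume "range e' \<subseteq> fst M"
    show "sat M e' f" using s sat_sentence[OF assms(2), of M e e'] by simp
  qed
qed

lemma struct_assign: "is_struct (M::'s struct) \<Longrightarrow> \<exists>e::nat \<Rightarrow> 's \<times> nat. range e \<subseteq> fst M"
proof -
  assume "is_struct M"
  then obtain d where "d \<in> fst M" unfolding is_struct_def by (meson ex_in_conv)
  then have "range (\<lambda>_::nat. d) \<subseteq> fst M" by (simp add: image_subset_iff)
  then show ?thesis by blast
qed

lemma models_Neg:
  fixes M :: "'s struct"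
  assumes "is_struct M" "freevars f = {}"
  shows "models M (Neg f) \<longleftrightarrow> \<not> models M f"
proof -
  obtain e :: "nat \<Rightarrow> 's \<times> nat" where e: "range e \<subseteq> fst M" using struct_assign[OF assms(1)] by blast
  obtain D A B where M: "M = (D, A, B)" by (cases M)
  show ?thesis using models_iff[OF assms e] models_iff[OF assms(1) _ e, of "Neg f"] assms M by simp
qed

lemma models_Conj:
  fixes M :: "'s struct"
  assumes "is_struct M" "freevars f = {}" "freevars g = {}"
  shows "models M (Conj f g) \<longleftrightarrow> models M f \<and> models M g"
proof -
  obtain e :: "nat \<Rightarrow> 's \<times> nat" where e: "range e \<subseteq> fst M" using struct_assign[OF assms(1)] by blast
  obtain D A B where M: "M = (D, A, B)" by (cases M)
  show ?thesis using models_iff[OF assms(1,2) e] models_iff[OF assms(1,3) e]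
     models_iff[OF assms(1) _ e, of "Conj f g"] assms M by simp
qed

definition th :: "'s set \<Rightarrow> 's set \<Rightarrow> 's struct \<Rightarrow> 's fm set" where
  "th Z U M = {f \<in> sentences Z U. models M f}"

lemma Neg_sentence: "f \<in> sentences Z U \<Longrightarrow> Neg f \<in> sentences Z U"
  by (simp add: sentences_def)

lemma th_complete: "is_struct M \<Longrightarrow> complete_theory Z U (th Z U M)"
  unfolding complete_theory_def
proof (intro conjI ballI impI)
  assume M: "is_struct M"
  show "th Z U M \<subseteq> sentences Z U" by (auto simp: th_def)
  show "\<exists>M'. is_struct M' \<and> (\<forall>g\<in>th Z U M. models M' g)" using M by (intro exI[of _ M]) (auto simp: th_def)
  fix f assume f: "f \<in> sentences Z U"
  then have "freevars f = {}" by (simp add: sentences_def)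
  then show "f \<in> th Z U M \<or> Neg f \<in> th Z U M"
    using f M models_Neg[OF M \<open>freevars f = {}\<close>] Neg_sentence[OF f] by (auto simp: th_def)
next
  fix f assume M: "is_struct M" and f: "f \<in> sentences Z U"
    and h: "\<forall>M'. is_struct M' \<longrightarrow> (\<forall>g\<in>th Z U M. models M' g) \<longrightarrow> models M' f"
  have "models M f" by (rule h[rule_format, OF M]) (simp add: th_def)
  then show "f \<in> th Z U M" using f by (simp add: th_def)
qed

lemma complete_th:
  assumes "complete_theory Z U T"
  shows "\<exists>M. is_struct M \<and> T = th Z U M"
proof -
  from assms obtain M where M: "is_struct M" "\<forall>g\<in>T. models M g"
    and sub: "T \<subseteq> sentences Z U" and compl: "\<forall>f\<in>sentences Z U. f \<in> T \<or> Neg f \<in> T"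
    unfolding complete_theory_def by blast
  have "T = th Z U M"
  proof
    show "T \<subseteq> th Z U M" using M sub by (auto simp: th_def)
    show "th Z U M \<subseteq> T"
    proof
      fix f assume "f \<in> th Z U M"
      then have f: "f \<in> sentences Z U" "models M f" by (auto simp: th_def)
      show "f \<in> T"
      proof (rule ccontr)
        assume "f \<notin> T"
        then have "models M (Neg f)" using compl f M by blast
        then show False using f models_Neg[OF M(1)] by (simp add: sentences_def)
      qed
    qed
  qed
  then show ?thesis using M by blast
qed

lemma all_theories_eq: "all_theories Z U = th Z U ` {M. is_struct M}"
  unfolding all_theories_def using complete_th th_complete by blast

lemma th_in_all: "is_struct M \<Longrightarrow> th Z U M \<in> all_theories Z U"
  by (simp add: all_theories_eq)

lemma in_th: "f \<in> th Z U M \<longleftrightarrow> f \<in> sentences Z U \<and> models M f"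
  by (simp add: th_def)

lemma inconsistentI:
  "(\<And>M. is_struct M \<Longrightarrow> models M f \<Longrightarrow> models M g \<Longrightarrow> False) \<Longrightarrow> inconsistent2 f g"
  unfolding inconsistent2_def by blast


definition tc :: "nat \<Rightarrow> 'a set \<Rightarrow> nat" where
  "tc q A = (if finite A then min (card A) q else q)"

lemma tc_le: "tc q A \<le> q" by (simp add: tc_def)

lemma tc_mono: "p \<le> q \<Longrightarrow> tc p A = min (tc q A) p"
  by (auto simp: tc_def min_def)

lemma tc_insert: "a \<notin> A \<Longrightarrow> tc q (insert a A) = min (Suc (tc q A)) q"
  by (auto simp: tc_def min_def)

lemma tc_remove: "a \<in> A \<Longrightarrow> 1 \<le> q \<Longrightarrow> tc (q - 1) (A - {a}) = tc q A - 1"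
proof (cases "finite A")
  case True
  assume "a \<in> A" "1 \<le> q"
  then have "card A \<ge> 1" using True by (metis One_nat_def Suc_leI card_gt_0_iff empty_iff)
  then show ?thesis using True \<open>a \<in> A\<close> by (simp add: tc_def card_Diff_singleton)
next
  case False
  then show ?thesis by (simp add: tc_def)
qed

lemma tc_empty: "tc q {} = 0" by (simp add: tc_def)

lemma tc_pos: "1 \<le> tc q A \<Longrightarrow> A \<noteq> {}"
  using tc_empty[of q] by (metis not_one_le_zero)

lemma diff_ins: "A - E' = (if a \<in> A \<and> a \<notin> E' then insert a (A - insert a E') else A - insert a E')"
  by auto

lemma tc_Suc: "tc (Suc n) A = Suc n \<longleftrightarrow> (\<exists>a\<in>A. tc n (A - {a}) = n)"
proof
  assume h: "tc (Suc n) A = Suc n"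
  then have "A \<noteq> {}" using tc_pos[of "Suc n" A] by simp
  then obtain a where a: "a \<in> A" by blast
  have "tc n (A - {a}) = tc (Suc n) A - 1" using tc_remove[OF a, of "Suc n"] by simp
  then show "\<exists>a\<in>A. tc n (A - {a}) = n" using a h by auto
next
  assume "\<exists>a\<in>A. tc n (A - {a}) = n"
  then obtain a where a: "a \<in> A" and h: "tc n (A - {a}) = n" by blast
  have "tc n (A - {a}) = tc (Suc n) A - 1" using tc_remove[OF a, of "Suc n"] by simp
  moreover have "tc (Suc n) A \<le> Suc n" by (rule tc_le)
  moreover have "tc (Suc n) A \<ge> 1"
    using a by (cases "finite A") (auto simp: tc_def Suc_le_eq card_gt_0_iff)
  ultimately show "tc (Suc n) A = Suc n" using h by linarith
qed

lemma tc_inj: "inj_on f A \<Longrightarrow> tc q (f ` A) = tc q A"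
  by (simp add: tc_def card_image finite_image_iff)

lemma tc_UNIV: "tc q (UNIV :: nat set) = q" by (simp add: tc_def)

lemma tc_lessThan: "tc q {..<c::nat} = min c q" by (simp add: tc_def)

lemma tc_small: "tc q A < q \<Longrightarrow> finite A \<and> card A = tc q A"
  by (auto simp: tc_def split: if_splits)

lemma tc_big: "p \<le> q \<Longrightarrow> tc q A = q \<Longrightarrow> tc p A = p"
  using tc_mono by (metis min.absorb2)

definition cl :: "'s set \<Rightarrow> ('s \<Rightarrow> 's \<times> nat \<Rightarrow> bool) \<Rightarrow> 's \<times> nat \<Rightarrow> 's set" where
  "cl U B d = {P \<in> U. B P d}"

definition cs :: "'s set \<Rightarrow> ('s \<times> nat) set \<Rightarrow> ('s \<Rightarrow> 's \<times> nat \<Rightarrow> bool) \<Rightarrow> 's set \<Rightarrow> ('s \<times> nat) set" where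
  "cs U D B S = {d \<in> D. cl U B d = S}"

fun depth :: "'s fm \<Rightarrow> nat" where
  "depth (Prop p) = 0"
| "depth (Pred P x) = 0"
| "depth (Eq x y) = 0"
| "depth (Neg f) = depth f"
| "depth (Conj f g) = max (depth f) (depth g)"
| "depth (Ex x f) = Suc (depth f)"

definition good :: "'s set \<Rightarrow> nat \<Rightarrow> nat set \<Rightarrow> ('s \<times> nat) set \<Rightarrow> ('s \<Rightarrow> 's \<times> nat \<Rightarrow> bool) \<Rightarrow> (nat \<Rightarrow> 's \<times> nat)
   \<Rightarrow> ('s \<times> nat) set \<Rightarrow> ('s \<Rightarrow> 's \<times> nat \<Rightarrow> bool) \<Rightarrow> (nat \<Rightarrow> 's \<times> nat) \<Rightarrow> bool" where
  "good U q V D1 B1 e1 D2 B2 e2 \<longleftrightarrow>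
     (\<forall>x\<in>V. \<forall>y\<in>V. (e1 x = e1 y) = (e2 x = e2 y))
   \<and> (\<forall>x\<in>V. cl U B1 (e1 x) = cl U B2 (e2 x))
   \<and> (\<forall>S. tc q (cs U D1 B1 S - e1 ` V) = tc q (cs U D2 B2 S - e2 ` V))"

lemma good_sym: "good U q V D1 B1 e1 D2 B2 e2 \<Longrightarrow> good U q V D2 B2 e2 D1 B1 e1"
  unfolding good_def by metis

lemma good_shrink:
  assumes g: "good U q V D1 B1 e1 D2 B2 e2" and r1: "range e1 \<subseteq> D1" and r2: "range e2 \<subseteq> D2"
  shows "good U q (V - {x}) D1 B1 e1 D2 B2 e2"
proof (cases "x \<in> V")
  case False then show ?thesis using g by simp
next
  case True
  have eq: "\<forall>u\<in>V. \<forall>v\<in>V. (e1 u = e1 v) = (e2 u = e2 v)" and cl: "\<forall>u\<in>V. cl U B1 (e1 u) = cl U B2 (e2 u)"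
    and t: "\<forall>S. tc q (cs U D1 B1 S - e1 ` V) = tc q (cs U D2 B2 S - e2 ` V)"
    using g unfolding good_def by blast+
  have "tc q (cs U D1 B1 S - e1 ` (V - {x})) = tc q (cs U D2 B2 S - e2 ` (V - {x}))" for S
  proof -
    have V: "V = insert x (V - {x})" using True by blast
    let ?c = "e1 x \<in> cs U D1 B1 S \<and> e1 x \<notin> e1 ` (V - {x})"
    have c: "?c = (e2 x \<in> cs U D2 B2 S \<and> e2 x \<notin> e2 ` (V - {x}))"
    proof -
      have "(e1 x \<in> cs U D1 B1 S) = (e2 x \<in> cs U D2 B2 S)"
        using cl True r1 r2 by (auto simp: cs_def)
      moreover have "(e1 x \<notin> e1 ` (V - {x})) = (e2 x \<notin> e2 ` (V - {x}))"
        using eq True by auto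
      ultimately show ?thesis by simp
    qed
    have s1: "cs U D1 B1 S - e1 ` (V - {x}) = (if ?c then insert (e1 x) (cs U D1 B1 S - e1 ` V) else cs U D1 B1 S - e1 ` V)"
    proof -
      have h: "insert (e1 x) (e1 ` (V - {x})) = e1 ` V" using True by blast
      then show ?thesis using diff_ins[of "cs U D1 B1 S" "e1 ` (V - {x})" "e1 x"] by (simp only: h)
    qed
    have s2: "cs U D2 B2 S - e2 ` (V - {x}) = (if ?c then insert (e2 x) (cs U D2 B2 S - e2 ` V) else cs U D2 B2 S - e2 ` V)"
    proof -
      have h: "insert (e2 x) (e2 ` (V - {x})) = e2 ` V" using True by blast
      then show ?thesis unfolding c using diff_ins[of "cs U D2 B2 S" "e2 ` (V - {x})" "e2 x"] by (simp only: h)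
    qed
    have n1: "e1 x \<notin> cs U D1 B1 S - e1 ` V" using True by auto
    have n2: "e2 x \<notin> cs U D2 B2 S - e2 ` V" using True by auto
    show ?thesis unfolding s1 s2 using t tc_insert[OF n1] tc_insert[OF n2] by simp
  qed
  then show ?thesis using eq cl unfolding good_def by blast
qed


lemma tc_ge1: "A \<noteq> {} \<Longrightarrow> 1 \<le> q \<Longrightarrow> 1 \<le> tc q A"
  by (cases "finite A") (auto simp: tc_def Suc_le_eq card_gt_0_iff)

lemma diff_insert_notin: "a \<notin> A \<Longrightarrow> A - insert a E = A - E" by auto

lemma diff_insert_in: "a \<in> A \<Longrightarrow> a \<notin> E \<Longrightarrow> A - insert a E = (A - E) - {a}" by auto

lemma good_extend:
  assumes g: "good U q W D1 B1 e1 D2 B2 e2" and x: "x \<notin> W" and q: "1 \<le> q" and a: "a \<in> D1"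
    and r2: "range e2 \<subseteq> D2"
  shows "\<exists>b\<in>D2. good U (q - 1) (insert x W) D1 B1 (e1(x := a)) D2 B2 (e2(x := b))"
proof -
  have eq: "\<forall>u\<in>W. \<forall>v\<in>W. (e1 u = e1 v) = (e2 u = e2 v)" and cl: "\<forall>u\<in>W. cl U B1 (e1 u) = cl U B2 (e2 u)"
    and t: "\<forall>S. tc q (cs U D1 B1 S - e1 ` W) = tc q (cs U D2 B2 S - e2 ` W)"
    using g unfolding good_def by blast+
  have m: "\<And>A. tc (q - 1) A = min (tc q A) (q - 1)" by (rule tc_mono) simp
  have im: "\<And>e c. (e(x := c)) ` (insert x W) = insert c (e ` W)" using x by auto
  show ?thesis
  proof (cases "a \<in> e1 ` W")
    case True
    then obtain y where y: "y \<in> W" "a = e1 y" by blast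
    define b where "b = e2 y"
    have b: "b \<in> D2" using r2 b_def by auto
    define \<sigma> where "\<sigma> u = (if u = x then y else u)" for u
    have s1: "(e1(x := a)) u = e1 (\<sigma> u)" "(e2(x := b)) u = e2 (\<sigma> u)" for u
      using y b_def \<sigma>_def by auto
    have sW: "u \<in> insert x W \<Longrightarrow> \<sigma> u \<in> W" for u using y \<sigma>_def by auto
    have i1: "insert a (e1 ` W) = e1 ` W" using True by blast
    have i2: "insert b (e2 ` W) = e2 ` W" using y b_def by blast
    have "good U (q - 1) (insert x W) D1 B1 (e1(x := a)) D2 B2 (e2(x := b))"
      unfolding good_def
    proof (intro conjI ballI allI)
      fix u v assume "u \<in> insert x W" "v \<in> insert x W"
      then have "\<sigma> u \<in> W" "\<sigma> v \<in> W" using sW by auto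
      then show "((e1(x := a)) u = (e1(x := a)) v) = ((e2(x := b)) u = (e2(x := b)) v)"
        unfolding s1 by (rule eq[rule_format])
    next
      fix u assume "u \<in> insert x W"
      then have "\<sigma> u \<in> W" using sW by auto
      then show "cl U B1 ((e1(x := a)) u) = cl U B2 ((e2(x := b)) u)"
        unfolding s1 by (rule cl[rule_format])
    next
      fix S
      show "tc (q - 1) (cs U D1 B1 S - (e1(x := a)) ` insert x W) = tc (q - 1) (cs U D2 B2 S - (e2(x := b)) ` insert x W)"
        unfolding im i1 i2 by (simp only: m t)
    qed
    then show ?thesis using b by blast
  next
    case False
    define S0 where "S0 = cl U B1 a"
    have a0: "a \<in> cs U D1 B1 S0 - e1 ` W" using a False S0_def by (simp add: cs_def)
    then have "cs U D1 B1 S0 - e1 ` W \<noteq> {}" by blast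
    then have "1 \<le> tc q (cs U D1 B1 S0 - e1 ` W)" using q by (rule tc_ge1)
    then have "1 \<le> tc q (cs U D2 B2 S0 - e2 ` W)" using t by simp
    then have "cs U D2 B2 S0 - e2 ` W \<noteq> {}" by (rule tc_pos)
    then obtain b where b0: "b \<in> cs U D2 B2 S0 - e2 ` W" by blast
    then have b: "b \<in> D2" "cl U B2 b = S0" "b \<notin> e2 ` W" by (auto simp: cs_def)
    have "good U (q - 1) (insert x W) D1 B1 (e1(x := a)) D2 B2 (e2(x := b))"
      unfolding good_def
    proof (intro conjI ballI allI)
      fix u v assume u: "u \<in> insert x W" and v: "v \<in> insert x W"
      show "((e1(x := a)) u = (e1(x := a)) v) = ((e2(x := b)) u = (e2(x := b)) v)"
      proof (cases "u = x")
        case True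
        show ?thesis
        proof (cases "v = x")
          case False3: False
          then have "v \<in> W" using v by simp
          then have "a \<noteq> e1 v" "b \<noteq> e2 v" using False b(3) by auto
          then show ?thesis using True False3 by simp
        qed (simp add: True)
      next
        case False2: False
        then have uW: "u \<in> W" using u by simp
        show ?thesis
        proof (cases "v = x")
          case True
          then have "a \<noteq> e1 u" "b \<noteq> e2 u" using False b(3) uW by auto
          then show ?thesis using True False2 by simp
        next
          case False3: False
          then have "v \<in> W" using v by simp
          then have "(e1 u = e1 v) = (e2 u = e2 v)" using uW eq by simp
          then show ?thesis using False2 False3 by simp
        qed
      qed
    next
      fix u assume "u \<in> insert x W"
      then show "cl U B1 ((e1(x := a)) u) = cl U B2 ((e2(x := b)) u)"
      proof (cases "u = x")
        case False
        then have "u \<in> W" using \<open>u \<in> insert x W\<close> by simp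
        then show ?thesis using cl False by simp
      qed (simp add: b(2) S0_def)
    next
      fix S
      show "tc (q - 1) (cs U D1 B1 S - (e1(x := a)) ` insert x W) = tc (q - 1) (cs U D2 B2 S - (e2(x := b)) ` insert x W)"
      proof (cases "S = S0")
        case True
        have "cs U D1 B1 S - insert a (e1 ` W) = (cs U D1 B1 S - e1 ` W) - {a}"
          using a0 True by auto
        moreover have "cs U D2 B2 S - insert b (e2 ` W) = (cs U D2 B2 S - e2 ` W) - {b}"
          using b0 True by auto
        ultimately show ?thesis unfolding im
          using tc_remove[of a "cs U D1 B1 S - e1 ` W" q] tc_remove[of b "cs U D2 B2 S - e2 ` W" q]
            a0 b0 True q t by simp
      next
        case False
        have "a \<notin> cs U D1 B1 S" using False S0_def by (auto simp: cs_def)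
        moreover have "b \<notin> cs U D2 B2 S" using False b(2) by (auto simp: cs_def)
        ultimately have "cs U D1 B1 S - insert a (e1 ` W) = cs U D1 B1 S - e1 ` W"
          "cs U D2 B2 S - insert b (e2 ` W) = cs U D2 B2 S - e2 ` W" by auto
        then show ?thesis unfolding im by (simp only: m t)
      qed
    qed
    then show ?thesis using b by blast
  qed
qed


lemma range_upd: "range e \<subseteq> D \<Longrightarrow> a \<in> D \<Longrightarrow> range (e(x := a)) \<subseteq> D"
  by auto

lemma qe:
  fixes D1 D2 :: "('s \<times> nat) set"
  assumes "in_lang Z U f" "freevars f \<subseteq> V" "depth f \<le> q" "good U q V D1 B1 e1 D2 B2 e2"
    "range e1 \<subseteq> D1" "range e2 \<subseteq> D2" "\<forall>p\<in>Z. A1 p = A2 p"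
  shows "sat (D1, A1, B1) e1 f = sat (D2, A2, B2) e2 f"
  using assms
proof (induction f arbitrary: V q e1 e2)
  case (Prop p)
  then show ?case by simp
next
  case (Pred P x)
  then have "P \<in> U" "x \<in> V" by auto
  then have "cl U B1 (e1 x) = cl U B2 (e2 x)" using Pred.prems(4) unfolding good_def by blast
  then have "(P \<in> cl U B1 (e1 x)) = (P \<in> cl U B2 (e2 x))" by simp
  then show ?case using \<open>P \<in> U\<close> by (simp add: cl_def)
next
  case (Eq x y)
  then have "x \<in> V" "y \<in> V" by auto
  then have "(e1 x = e1 y) = (e2 x = e2 y)" using Eq.prems(4) unfolding good_def by blast
  then show ?case by simp
next
  case (Neg f)
  have "sat (D1, A1, B1) e1 f = sat (D2, A2, B2) e2 f"
    by (rule Neg.IH) (use Neg.prems in auto)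
  then show ?case by simp
next
  case (Conj f g)
  have "sat (D1, A1, B1) e1 f = sat (D2, A2, B2) e2 f"
    by (rule Conj.IH(1)) (use Conj.prems in auto)
  moreover have "sat (D1, A1, B1) e1 g = sat (D2, A2, B2) e2 g"
    by (rule Conj.IH(2)) (use Conj.prems in auto)
  ultimately show ?case by simp
next
  case (Ex x f)
  have q: "1 \<le> q" using Ex.prems(3) by simp
  have dq: "depth f \<le> q - 1" using Ex.prems(3) by simp
  have lf: "in_lang Z U f" using Ex.prems(1) by simp
  define W where "W = V - {x}"
  have xW: "x \<notin> W" by (simp add: W_def)
  have fv: "freevars f \<subseteq> insert x W" using Ex.prems(2) by (auto simp: W_def)
  have gW: "good U q W D1 B1 e1 D2 B2 e2" unfolding W_def
    by (rule good_shrink) (use Ex.prems in auto)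
  show ?case
  proof
    assume "sat (D1, A1, B1) e1 (fm.Ex x f)"
    then obtain a where a: "a \<in> D1" "sat (D1, A1, B1) (e1(x := a)) f" by auto
    obtain b where b: "b \<in> D2" "good U (q - 1) (insert x W) D1 B1 (e1(x := a)) D2 B2 (e2(x := b))"
      using good_extend[OF gW xW q a(1) Ex.prems(6)] by blast
    have "sat (D1, A1, B1) (e1(x := a)) f = sat (D2, A2, B2) (e2(x := b)) f"
      by (rule Ex.IH[OF lf fv dq b(2)]) (use Ex.prems a b range_upd in auto)
    then show "sat (D2, A2, B2) e2 (fm.Ex x f)" using a b by auto
  next
    assume "sat (D2, A2, B2) e2 (fm.Ex x f)"
    then obtain b where b: "b \<in> D2" "sat (D2, A2, B2) (e2(x := b)) f" by auto
    obtain a where a: "a \<in> D1" "good U (q - 1) (insert x W) D2 B2 (e2(x := b)) D1 B1 (e1(x := a))"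
      using good_extend[OF good_sym[OF gW] xW q b(1) Ex.prems(5)] by blast
    have "sat (D1, A1, B1) (e1(x := a)) f = sat (D2, A2, B2) (e2(x := b)) f"
      by (rule Ex.IH[OF lf fv dq good_sym[OF a(2)]]) (use Ex.prems a b range_upd in auto)
    then show "sat (D1, A1, B1) e1 (fm.Ex x f)" using a b by auto
  qed
qed


definition CS :: "'s set \<Rightarrow> 's struct \<Rightarrow> 's set \<Rightarrow> ('s \<times> nat) set" where
  "CS U M S = cs U (fst M) (snd (snd M)) S"

lemma CS_notsub: "\<not> S \<subseteq> U \<Longrightarrow> CS U M S = {}"
  by (auto simp: CS_def cs_def cl_def)

lemma good_empty: "(\<forall>S. tc q (cs U D1 B1 S) = tc q (cs U D2 B2 S)) \<Longrightarrow> good U q {} D1 B1 e1 D2 B2 e2"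
  unfolding good_def by simp

lemma qe_sent:
  fixes M1 M2 :: "'s struct"
  assumes f: "f \<in> sentences Z U" and d: "depth f \<le> q" and s1: "is_struct M1"
    and P: "\<forall>p\<in>Z. fst (snd M1) p = fst (snd M2) p"
    and t: "\<forall>S. tc q (CS U M1 S) = tc q (CS U M2 S)" and m: "models M1 f"
  shows "models M2 f"
proof -
  obtain D1 A1 B1 where M1: "M1 = (D1, A1, B1)" by (cases M1)
  obtain D2 A2 B2 where M2: "M2 = (D2, A2, B2)" by (cases M2)
  obtain e1 :: "nat \<Rightarrow> 's \<times> nat" where e1: "range e1 \<subseteq> fst M1" using struct_assign[OF s1] by blast
  have s: "sat M1 e1 f" using m e1 unfolding models_def by blast
  show ?thesis unfolding models_def
  proof (intro allI impI)
    fix e2 :: "nat \<Rightarrow> 's \<times> nat" assume e2: "range e2 \<subseteq> fst M2"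
    have g: "good U q {} D1 B1 e1 D2 B2 e2"
      by (rule good_empty) (use t in \<open>simp add: CS_def M1 M2\<close>)
    have "sat (D1, A1, B1) e1 f = sat (D2, A2, B2) e2 f"
      by (rule qe[OF _ _ d g]) (use f e1 e2 P in \<open>auto simp: sentences_def M1 M2\<close>)
    then show "sat M2 e2 f" using s M1 M2 by simp
  qed
qed

definition s0 :: "'s set \<Rightarrow> 's" where "s0 U = (SOME s. s \<in> U)"
definition idx :: "'s set \<Rightarrow> 's set \<Rightarrow> nat" where "idx U = (SOME f. inj_on f (Pow U))"
definition bnd :: "'s set \<Rightarrow> nat" where "bnd U = Suc (Max (idx U ` Pow U))"
definition enc :: "'s set \<Rightarrow> 's set \<Rightarrow> nat \<Rightarrow> nat" where "enc U S i = idx U S + bnd U * i"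

definition mk :: "'s set \<Rightarrow> 's set \<Rightarrow> ('s set \<Rightarrow> nat set) \<Rightarrow> 's struct" where
  "mk U z K = ((\<lambda>(S, i). (s0 U, enc U S i)) ` {(S, i). S \<subseteq> U \<and> i \<in> K S},
     \<lambda>p. p \<in> z,
     \<lambda>P d. \<exists>S i. S \<subseteq> U \<and> i \<in> K S \<and> d = (s0 U, enc U S i) \<and> P \<in> S)"

lemma idx_inj: "finite (U::'s set) \<Longrightarrow> inj_on (idx U) (Pow U)"
proof -
  assume "finite U"
  then have "finite (Pow U)" by simp
  then obtain f :: "'s set \<Rightarrow> nat" and n where "inj_on f (Pow U)"
    using finite_imp_inj_to_nat_seg by blast
  then show ?thesis unfolding idx_def by (rule someI[where P="\<lambda>f. inj_on f (Pow U)"])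
qed

lemma idx_lt: "finite U \<Longrightarrow> S \<subseteq> U \<Longrightarrow> idx U S < bnd U"
proof -
  assume "finite U" "S \<subseteq> U"
  then have "idx U S \<le> Max (idx U ` Pow U)" by (intro Max_ge) auto
  then show ?thesis by (simp add: bnd_def)
qed

lemma enc_inj:
  assumes "finite U" "S \<subseteq> U" "S' \<subseteq> U" "enc U S i = enc U S' i'"
  shows "S = S' \<and> i = i'"
proof -
  have l1: "idx U S < bnd U" and l2: "idx U S' < bnd U" using idx_lt assms by auto
  have "enc U S i mod bnd U = idx U S" using l1 by (simp add: enc_def)
  moreover have "enc U S' i' mod bnd U = idx U S'" using l2 by (simp add: enc_def)
  ultimately have "idx U S = idx U S'" using assms(4) by simp
  then have SS: "S = S'" using idx_inj[OF assms(1)] assms(2,3) by (auto dest: inj_onD)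
  have "enc U S i div bnd U = i" using l1 by (simp add: enc_def)
  moreover have "enc U S' i' div bnd U = i'" using l2 by (simp add: enc_def)
  ultimately have "i = i'" using assms(4) by simp
  then show ?thesis using SS by simp
qed

lemma cl_mk:
  assumes "finite U" "S \<subseteq> U" "i \<in> K S"
  shows "cl U (snd (snd (mk U z K))) (s0 U, enc U S i) = S"
proof -
  have "\<And>P. P \<in> U \<Longrightarrow> (\<exists>S' i'. S' \<subseteq> U \<and> i' \<in> K S' \<and> (s0 U, enc U S i) = (s0 U, enc U S' i') \<and> P \<in> S') = (P \<in> S)"
    using enc_inj[OF assms(1)] assms(2,3) by blast
  then show ?thesis using assms(2) by (auto simp: cl_def mk_def)
qed

lemma CS_mk:
  assumes "finite U" "S \<subseteq> U"
  shows "CS U (mk U z K) S = (\<lambda>i. (s0 U, enc U S i)) ` K S"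
proof
  show "CS U (mk U z K) S \<subseteq> (\<lambda>i. (s0 U, enc U S i)) ` K S"
  proof
    fix d assume "d \<in> CS U (mk U z K) S"
    then have d: "d \<in> fst (mk U z K)" "cl U (snd (snd (mk U z K))) d = S" by (auto simp: CS_def cs_def)
    then obtain S' i where S': "S' \<subseteq> U" "i \<in> K S'" "d = (s0 U, enc U S' i)" by (auto simp: mk_def)
    then have "S' = S" using cl_mk[of U S' i K z, OF assms(1) S'(1,2)] d(2) by simp
    then show "d \<in> (\<lambda>i. (s0 U, enc U S i)) ` K S" using S' by auto
  qed
next
  show "(\<lambda>i. (s0 U, enc U S i)) ` K S \<subseteq> CS U (mk U z K) S"
  proof
    fix d assume "d \<in> (\<lambda>i. (s0 U, enc U S i)) ` K S"
    then obtain i where i: "i \<in> K S" "d = (s0 U, enc U S i)" by blast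
    have "d \<in> fst (mk U z K)" using i assms(2) by (auto simp: mk_def)
    moreover have "cl U (snd (snd (mk U z K))) d = S" using cl_mk[of U S i K z, OF assms i(1)] i(2) by simp
    ultimately show "d \<in> CS U (mk U z K) S" by (simp add: CS_def cs_def)
  qed
qed

lemma tc_CS_mk:
  assumes "finite U" "S \<subseteq> U"
  shows "tc q (CS U (mk U z K) S) = tc q (K S)"
proof -
  have "inj_on (\<lambda>i. (s0 U, enc U S i)) (K S)"
    using enc_inj[OF assms(1,2,2)] by (auto intro: inj_onI)
  then show ?thesis unfolding CS_mk[OF assms] by (rule tc_inj)
qed

lemma mk_struct: "S \<subseteq> U \<Longrightarrow> K S \<noteq> {} \<Longrightarrow> is_struct (mk U z K)"
  unfolding is_struct_def mk_def by auto

lemma mk_P0: "fst (snd (mk U z K)) = (\<lambda>p. p \<in> z)"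
  by (simp add: mk_def)


definition Top :: "'s fm" where "Top = Ex 0 (Eq 0 0)"

fun cellf :: "'s list \<Rightarrow> 's set \<Rightarrow> nat \<Rightarrow> 's fm" where
  "cellf [] S x = Eq x x"
| "cellf (P # us) S x = Conj (if P \<in> S then Pred P x else Neg (Pred P x)) (cellf us S x)"

fun dist :: "nat \<Rightarrow> nat \<Rightarrow> 's fm" where
  "dist 0 k = Eq k k"
| "dist (Suc i) k = Conj (Neg (Eq i k)) (dist i k)"

fun gS :: "'s list \<Rightarrow> 's set \<Rightarrow> nat \<Rightarrow> nat \<Rightarrow> 's fm" where
  "gS us S k 0 = Top"
| "gS us S k (Suc n) = Ex k (Conj (cellf us S k) (Conj (dist k k) (gS us S (Suc k) n)))"

definition al :: "'s list \<Rightarrow> 's set \<Rightarrow> nat \<Rightarrow> 's fm" where "al us S n = gS us S 0 n"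

definition exactly :: "'s list \<Rightarrow> 's set \<Rightarrow> nat \<Rightarrow> 's fm" where
  "exactly us S c = Conj (al us S c) (Neg (al us S (Suc c)))"

fun zeta :: "'s list \<Rightarrow> 's set \<Rightarrow> 's fm" where
  "zeta [] z = Top"
| "zeta (p # zs) z = Conj (if p \<in> z then Prop p else Neg (Prop p)) (zeta zs z)"

lemma Top_sat: "D \<noteq> {} \<Longrightarrow> sat (D, A, B) e Top"
  by (auto simp: Top_def)

lemma fv_Top: "freevars Top = {}" by (simp add: Top_def)
lemma lang_Top: "in_lang Z U Top" by (simp add: Top_def)

lemma sat_cellf: "sat (D, A, B) e (cellf us S x) \<longleftrightarrow> (\<forall>P\<in>set us. B P (e x) = (P \<in> S))"
  by (induction us) auto

lemma sat_cellf_cl: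
  assumes "set us = U" "S \<subseteq> U"
  shows "sat (D, A, B) e (cellf us S x) \<longleftrightarrow> cl U B (e x) = S"
  unfolding sat_cellf cl_def using assms by auto

lemma fv_cellf: "freevars (cellf us S x) \<subseteq> {x}"
  by (induction us) auto

lemma lang_cellf: "set us \<subseteq> U \<Longrightarrow> in_lang Z U (cellf us S x)"
  by (induction us) auto

lemma sat_dist: "sat (D, A, B) e (dist i k) \<longleftrightarrow> (\<forall>j<i. e j \<noteq> e k)"
  by (induction i) (auto simp: less_Suc_eq)

lemma fv_dist: "freevars (dist i k) \<subseteq> insert k {..<i}"
  by (induction i) auto

lemma lang_dist: "in_lang Z U (dist i k)"
  by (induction i) auto

lemma fv_gS: "freevars (gS us S k n) \<subseteq> {..<k}"
proof (induction n arbitrary: k)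
  case 0 then show ?case by (simp add: fv_Top)
next
  case (Suc n)
  have "freevars (cellf us S k) \<subseteq> {..<Suc k}" using fv_cellf[of us S k] by auto
  moreover have "freevars (dist k k :: 's fm) \<subseteq> {..<Suc k}" using fv_dist[of k k] by auto
  moreover have "freevars (gS us S (Suc k) n) \<subseteq> {..<Suc k}" by (rule Suc.IH)
  ultimately show ?case by auto
qed

lemma lang_gS: "set us \<subseteq> U \<Longrightarrow> in_lang Z U (gS us S k n)"
  by (induction n arbitrary: k) (auto simp: lang_Top lang_cellf lang_dist)

lemma sat_gS:
  assumes "set us = U" "S \<subseteq> U" "D \<noteq> {}"
  shows "sat (D, A, B) e (gS us S k n) \<longleftrightarrow> tc n (cs U D B S - e ` {..<k}) = n"
  using assms(3)
proof (induction n arbitrary: k e)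
  case 0 then show ?case by (simp add: Top_sat tc_def)
next
  case (Suc n)
  let ?E = "e ` {..<k}"
  have im: "(e(k := a)) ` {..<Suc k} = insert a ?E" for a
  proof -
    have "{..<Suc k} = insert k {..<k}" by auto
    then show ?thesis by auto
  qed
  have "sat (D, A, B) e (gS us S k (Suc n)) \<longleftrightarrow>
     (\<exists>a\<in>D. cl U B a = S \<and> (\<forall>j<k. e j \<noteq> a) \<and> tc n (cs U D B S - insert a ?E) = n)"
  proof -
    have dk: "sat (D, A, B) (e(k := a)) (dist k k) \<longleftrightarrow> (\<forall>j<k. e j \<noteq> a)" for a
      unfolding sat_dist by auto
    show ?thesis using Suc.IH[OF Suc.prems] sat_cellf_cl[OF assms(1,2)] dk im by simp
  qed
  also have "\<dots> \<longleftrightarrow> (\<exists>a\<in>cs U D B S - ?E. tc n ((cs U D B S - ?E) - {a}) = n)"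
  proof -
    have r: "\<And>a. cs U D B S - insert a ?E = (cs U D B S - ?E) - {a}" by auto
    have m: "a \<in> cs U D B S - ?E \<longleftrightarrow> a \<in> D \<and> cl U B a = S \<and> (\<forall>j<k. e j \<noteq> a)" for a
      by (auto simp: cs_def)
    show ?thesis
    proof
      assume "\<exists>a\<in>D. cl U B a = S \<and> (\<forall>j<k. e j \<noteq> a) \<and> tc n (cs U D B S - insert a ?E) = n"
      then obtain a where "a \<in> D" "cl U B a = S" "\<forall>j<k. e j \<noteq> a" "tc n (cs U D B S - insert a ?E) = n"
        by blast
      then show "\<exists>a\<in>cs U D B S - ?E. tc n ((cs U D B S - ?E) - {a}) = n"
        using m[of a] r[of a] by metis
    next
      assume "\<exists>a\<in>cs U D B S - ?E. tc n ((cs U D B S - ?E) - {a}) = n"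
      then obtain a where "a \<in> cs U D B S - ?E" "tc n ((cs U D B S - ?E) - {a}) = n" by blast
      then show "\<exists>a\<in>D. cl U B a = S \<and> (\<forall>j<k. e j \<noteq> a) \<and> tc n (cs U D B S - insert a ?E) = n"
        using m[of a] r[of a] by metis
    qed
  qed
  also have "\<dots> \<longleftrightarrow> tc (Suc n) (cs U D B S - ?E) = Suc n" by (rule tc_Suc[symmetric])
  finally show ?case .
qed

lemma al_sentence: "set us \<subseteq> U \<Longrightarrow> al us S n \<in> sentences Z U"
  using fv_gS[of us S 0 n] lang_gS[of us U Z S 0 n] by (auto simp: sentences_def al_def)

lemma exactly_sentence: "set us \<subseteq> U \<Longrightarrow> exactly us S n \<in> sentences Z U"
  using al_sentence[of us U S n Z] al_sentence[of us U S "Suc n" Z] by (auto simp: sentences_def exactly_def)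

lemma models_al:
  fixes M :: "'s struct"
  assumes "set us = U" "S \<subseteq> U" "is_struct M"
  shows "models M (al us S n) \<longleftrightarrow> tc n (CS U M S) = n"
proof -
  obtain D A B where M: "M = (D, A, B)" by (cases M)
  obtain e :: "nat \<Rightarrow> 's \<times> nat" where e: "range e \<subseteq> fst M" using struct_assign[OF assms(3)] by blast
  have "models M (al us S n) = sat M e (al us S n)"
    by (rule models_iff[OF assms(3) _ e]) (use fv_gS[of us S 0 n] in \<open>simp add: al_def\<close>)
  also have "\<dots> = (tc n (CS U M S) = n)"
    using sat_gS[OF assms(1,2), where D=D and A=A and B=B and e=e and k=0 and n=n] assms(3) M by (simp add: al_def CS_def is_struct_def)
  finally show ?thesis .
qed

lemma models_exactly:
  fixes M :: "'s struct"
  assumes "set us = U" "S \<subseteq> U" "is_struct M"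
  shows "models M (exactly us S c) \<longleftrightarrow> finite (CS U M S) \<and> card (CS U M S) = c"
proof -
  have fv: "freevars (al us S n) = {}" for n using fv_gS[of us S 0 n] by (simp add: al_def)
  have "models M (exactly us S c) \<longleftrightarrow> tc c (CS U M S) = c \<and> tc (Suc c) (CS U M S) \<noteq> Suc c"
    unfolding exactly_def using models_Conj[OF assms(3)] models_Neg[OF assms(3)] fv
      models_al[OF assms] by simp
  also have "\<dots> \<longleftrightarrow> finite (CS U M S) \<and> card (CS U M S) = c"
    by (auto simp: tc_def min_def)
  finally show ?thesis .
qed

lemma sat_zeta: "D \<noteq> {} \<Longrightarrow> sat (D, A, B) e (zeta zs z) \<longleftrightarrow> (\<forall>p\<in>set zs. A p = (p \<in> z))"
  by (induction zs) (auto simp: Top_sat)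

lemma zeta_sentence: "set zs \<subseteq> Z \<Longrightarrow> zeta zs z \<in> sentences Z U"
  by (induction zs) (auto simp: sentences_def fv_Top lang_Top)

lemma models_zeta:
  fixes M :: "'s struct"
  assumes "set zs = Z" "is_struct M"
  shows "models M (zeta zs z) \<longleftrightarrow> (\<forall>p\<in>Z. fst (snd M) p = (p \<in> z))"
proof -
  obtain D A B where M: "M = (D, A, B)" by (cases M)
  obtain e :: "nat \<Rightarrow> 's \<times> nat" where e: "range e \<subseteq> fst M" using struct_assign[OF assms(2)] by blast
  have "models M (zeta zs z) = sat M e (zeta zs z)"
    by (rule models_iff[OF assms(2) _ e]) (use zeta_sentence[of zs Z z "{}"] assms(1) in \<open>simp add: sentences_def\<close>)
  then show ?thesis using sat_zeta[of D A B e zs z] assms M by (simp add: is_struct_def)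
qed


lemma lessThan_ne: "1 \<le> (c::nat) \<Longrightarrow> {..<c} \<noteq> {}"
proof -
  assume "1 \<le> c" then have "0 \<in> {..<c}" by simp
  then show ?thesis by blast
qed

lemma CS_mk_card:
  assumes "finite U" "S \<subseteq> U"
  shows "finite (CS U (mk U z K) S) = finite (K S) \<and> card (CS U (mk U z K) S) = card (K S)"
proof -
  have i: "inj_on (\<lambda>i. (s0 U, enc U S i)) (K S)"
    using enc_inj[OF assms(1,2,2)] by (auto intro: inj_onI)
  show ?thesis unfolding CS_mk[OF assms] using card_image[OF i] finite_image_iff[OF i] by simp
qed

lemma exactly_incons:
  assumes "set us = U" "S \<subseteq> U" "c \<noteq> c'"
  shows "inconsistent2 (exactly us S c) (exactly us S c')"
proof (rule inconsistentI)
  fix M :: "'a struct" assume M: "is_struct M" "models M (exactly us S c)" "models M (exactly us S c')"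
  then show False using models_exactly[OF assms(1,2) M(1)] assms(3) by simp
qed

lemma infinite_from_inj:
  assumes "inj (f :: nat \<Rightarrow> 'a)" "range f \<subseteq> G" shows "infinite G"
  using assms infinite_iff_countable_subset by blast

lemma models_exactly_mk:
  assumes fin: "finite U" and us: "set us = U" and S: "S \<subseteq> U" and K: "K S = {..<c}" and c: "1 \<le> c"
  shows "models (mk U z K) (exactly us S c)"
proof -
  have "0 \<in> K S" using K c by simp
  then have st: "is_struct (mk U z K)" by (intro mk_struct[OF S]) auto
  show ?thesis unfolding models_exactly[OF us S st] using CS_mk_card[OF fin S, of z K] K by simp
qed

lemma lower:
  fixes Z U :: "'s set" and J :: "'s set set"
  assumes fin: "finite U" and us: "set us = U"
  shows "1 \<le> j \<Longrightarrow> card J = j \<Longrightarrow> J \<subseteq> Pow U \<Longrightarrow> 1 \<le> t \<Longrightarrow>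
   {th Z U (mk U z K') | K'. (\<forall>S. S \<notin> J \<longrightarrow> K' S = K S) \<and> (\<forall>S\<in>J. \<exists>c\<ge>t. K' S = {..<c})} \<subseteq> G
   \<Longrightarrow> rs_ge Z U G j"
proof (induction j arbitrary: J K G)
  case 0 then show ?case by simp
next
  case (Suc j)
  show ?case
  proof (cases j)
    case 0
    then obtain S0 where J: "J = {S0}" using Suc.prems(2) card_1_singletonE by auto
    then have S0: "S0 \<subseteq> U" using Suc.prems(3) by auto
    define T where "T c = th Z U (mk U z (K(S0 := {..<t + c})))" for c
    have TG: "range T \<subseteq> G"
    proof
      fix x assume "x \<in> range T"
      then obtain c where x: "x = T c" by blast
      have "(\<forall>S. S \<notin> J \<longrightarrow> (K(S0 := {..<t + c})) S = K S) \<and> (\<forall>S\<in>J. \<exists>c'\<ge>t. (K(S0 := {..<t + c})) S = {..<c'})"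
        using J by auto
      then show "x \<in> G" using Suc.prems(5) x T_def by blast
    qed
    have "inj T"
    proof (rule injI)
      fix c c' assume eq: "T c = T c'"
      have in1: "exactly us S0 (t + c) \<in> T c"
        unfolding T_def in_th using exactly_sentence[of us U S0 "t + c" Z] us
          models_exactly_mk[OF fin us S0, of "K(S0 := {..<t + c})" "t + c" z] Suc.prems(4) by simp
      have "exactly us S0 (t + c) \<in> T c'" using in1 eq by simp
      then have "models (mk U z (K(S0 := {..<t + c'}))) (exactly us S0 (t + c))"
        unfolding T_def in_th by simp
      moreover have "is_struct (mk U z (K(S0 := {..<t + c'})))"
        by (rule mk_struct[OF S0]) (use Suc.prems(4) lessThan_ne[of "t + c'"] in simp)
      ultimately have "card (CS U (mk U z (K(S0 := {..<t + c'}))) S0) = t + c"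
        using models_exactly[OF us S0] by blast
      then show "c = c'" using CS_mk_card[OF fin S0, of z "K(S0 := {..<t + c'})"] by simp
    qed
    then have "infinite G" using TG infinite_from_inj by blast
    then show ?thesis using 0 by (simp add: rs_ge_1)
  next
    case (Suc n)
    have "J \<noteq> {}" using Suc.prems(2) by auto
    then obtain S0 where S0J: "S0 \<in> J" by blast
    then have S0: "S0 \<subseteq> U" using Suc.prems(3) by auto
    have finJ: "finite J" using Suc.prems(2) by (metis card.infinite nat.distinct(1))
    define J' where "J' = J - {S0}"
    have cJ': "card J' = Suc n" using Suc.prems(2) \<open>j = Suc n\<close> S0J finJ by (simp add: J'_def)
    have J'U: "J' \<subseteq> Pow U" using Suc.prems(3) by (auto simp: J'_def)
    define \<phi> where "\<phi> i = exactly us S0 (t + i)" for i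
    have "\<forall>i. rs_ge Z U (restr G (\<phi> i)) (Suc n)"
    proof
      fix i
      let ?K = "K(S0 := {..<t + i})"
      have sub: "{th Z U (mk U z K') | K'. (\<forall>S. S \<notin> J' \<longrightarrow> K' S = ?K S) \<and> (\<forall>S\<in>J'. \<exists>c\<ge>t. K' S = {..<c})}
         \<subseteq> restr G (\<phi> i)"
      proof
        fix x assume "x \<in> {th Z U (mk U z K') | K'. (\<forall>S. S \<notin> J' \<longrightarrow> K' S = ?K S) \<and> (\<forall>S\<in>J'. \<exists>c\<ge>t. K' S = {..<c})}"
        then obtain K' where x: "x = th Z U (mk U z K')" and K'1: "\<forall>S. S \<notin> J' \<longrightarrow> K' S = ?K S"
          and K'2: "\<forall>S\<in>J'. \<exists>c\<ge>t. K' S = {..<c}" by blast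
        have KS0: "K' S0 = {..<t + i}" using K'1 by (simp add: J'_def)
        have "(\<forall>S. S \<notin> J \<longrightarrow> K' S = K S) \<and> (\<forall>S\<in>J. \<exists>c\<ge>t. K' S = {..<c})"
        proof (intro conjI allI ballI impI)
          fix S assume "S \<notin> J" then show "K' S = K S" using K'1 S0J by (auto simp: J'_def)
        next
          fix S assume "S \<in> J"
          show "\<exists>c\<ge>t. K' S = {..<c}"
          proof (cases "S = S0")
            case True then show ?thesis using KS0 by auto
          next
            case False then show ?thesis using K'2 \<open>S \<in> J\<close> by (auto simp: J'_def)
          qed
        qed
        then have "x \<in> G" using Suc.prems(5) x by blast
        moreover have "\<phi> i \<in> x"
          unfolding x in_th \<phi>_def using exactly_sentence[of us U S0 "t + i" Z] us
            models_exactly_mk[of U us S0 K' "t + i" z, OF fin us S0 KS0] Suc.prems(4) by simp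
        ultimately show "x \<in> restr G (\<phi> i)" by (simp add: restr_def)
      qed
      show "rs_ge Z U (restr G (\<phi> i)) (Suc n)"
        using Suc.IH[unfolded \<open>j = Suc n\<close>, OF _ cJ' J'U Suc.prems(4) sub] by simp
    qed
    moreover have "\<forall>i. \<phi> i \<in> sentences Z U" using exactly_sentence[of us U] us by (simp add: \<phi>_def)
    moreover have "\<forall>i j. i \<noteq> j \<longrightarrow> inconsistent2 (\<phi> i) (\<phi> j)"
      using exactly_incons[OF us S0] by (auto simp: \<phi>_def)
    ultimately show ?thesis unfolding \<open>j = Suc n\<close> rs_ge_SS by blast
  qed
qed


definition big :: "'s set \<Rightarrow> nat \<Rightarrow> 's struct \<Rightarrow> 's set set" where
  "big U q M = {S \<in> Pow U. tc q (CS U M S) = q}"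

definition sig :: "'s set \<Rightarrow> 's set \<Rightarrow> nat \<Rightarrow> 's struct \<Rightarrow> 's set \<times> ('s set \<times> nat) set" where
  "sig Z U q M = ({p \<in> Z. fst (snd M) p}, {(S, tc q (CS U M S)) | S. S \<subseteq> U})"

definition star :: "'s set \<Rightarrow> 's set \<Rightarrow> nat \<Rightarrow> 's struct \<Rightarrow> 's struct" where
  "star Z U q M = mk U {p \<in> Z. fst (snd M) p} (\<lambda>S. if S \<in> big U q M then UNIV else {..< tc q (CS U M S)})"

lemma sig_P0: "sig Z U q M1 = sig Z U q M2 \<Longrightarrow> \<forall>p\<in>Z. fst (snd M1) p = fst (snd M2) p"
  unfolding sig_def by (auto simp: set_eq_iff)

lemma sig_tc: 
  assumes "sig Z U q M1 = sig Z U q M2"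
  shows "tc q (CS U M1 S) = tc q (CS U M2 S)"
proof (cases "S \<subseteq> U")
  case True
  have "(S, tc q (CS U M1 S)) \<in> snd (sig Z U q M1)" using True by (auto simp: sig_def)
  then have "(S, tc q (CS U M1 S)) \<in> snd (sig Z U q M2)" using assms by simp
  then show ?thesis by (auto simp: sig_def)
next
  case False then show ?thesis by (simp add: CS_notsub)
qed

lemma sig_big: "sig Z U q M1 = sig Z U q M2 \<Longrightarrow> big U q M1 = big U q M2"
  unfolding big_def using sig_tc by fastforce

lemma sig_in: "sig Z U q M \<in> Pow Z \<times> Pow (Pow U \<times> {..q})"
  unfolding sig_def using tc_le by auto

lemma sig_star: "sig Z U q M1 = sig Z U q M2 \<Longrightarrow> star Z U q M1 = star Z U q M2"
proof -
  assume s: "sig Z U q M1 = sig Z U q M2"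
  have "{p \<in> Z. fst (snd M1) p} = {p \<in> Z. fst (snd M2) p}" using sig_P0[OF s] by auto
  moreover have "(\<lambda>S. if S \<in> big U q M1 then UNIV else {..< tc q (CS U M1 S)}) =
     (\<lambda>S. if S \<in> big U q M2 then UNIV else {..< tc q (CS U M2 S)})"
    by (rule ext) (simp add: sig_big[OF s] sig_tc[OF s])
  ultimately show ?thesis unfolding star_def by simp
qed

lemma finite_sigset: "finite Z \<Longrightarrow> finite U \<Longrightarrow> finite (Pow Z \<times> Pow (Pow U \<times> {..q::nat}))"
  by (auto intro: finite_cartesian_product simp: finite_Pow_iff)

lemma to_star:
  fixes M :: "'s struct"
  assumes fin: "finite U" and M: "is_struct M" and qq: "q \<le> q'" and bb: "big U q M = big U q' M"
    and ne: "big U q M \<noteq> {}" and f: "f \<in> sentences Z U" and d: "depth f \<le> q'" and m: "models M f"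
  shows "models (star Z U q M) f \<and> is_struct (star Z U q M)"
proof
  obtain S0 where S0: "S0 \<in> big U q M" using ne by blast
  then have "S0 \<subseteq> U" by (simp add: big_def)
  then show st: "is_struct (star Z U q M)" unfolding star_def
    by (rule mk_struct) (use S0 in simp)
  show "models (star Z U q M) f"
  proof (rule qe_sent[OF f d M _ _ m])
    show "\<forall>p\<in>Z. fst (snd M) p = fst (snd (star Z U q M)) p"
      by (simp add: star_def mk_P0)
    show "\<forall>S. tc q' (CS U M S) = tc q' (CS U (star Z U q M) S)"
    proof
      fix S
      show "tc q' (CS U M S) = tc q' (CS U (star Z U q M) S)"
      proof (cases "S \<subseteq> U")
        case False then show ?thesis by (simp add: CS_notsub)
      next
        case True
        have e: "tc q' (CS U (star Z U q M) S) = tc q' (if S \<in> big U q M then UNIV else {..< tc q (CS U M S)})"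
          unfolding star_def by (rule tc_CS_mk[OF fin True])
        show ?thesis
        proof (cases "S \<in> big U q M")
          case True2: True
          then have "S \<in> big U q' M" using bb by simp
          then have "tc q' (CS U M S) = q'" by (simp add: big_def)
          then show ?thesis using e True2 by (simp add: tc_UNIV)
        next
          case False
          then have "tc q (CS U M S) \<noteq> q" using True by (simp add: big_def)
          then have "tc q (CS U M S) < q" using tc_le[of q "CS U M S"] by simp
          then have fc: "finite (CS U M S)" "card (CS U M S) = tc q (CS U M S)" using tc_small by blast+
          then show ?thesis using e False by (simp add: tc_lessThan tc_def)
        qed
      qed
    qed
  qed
qed

lemma same_th:
  fixes M1 M2 :: "'s struct"
  assumes M1: "is_struct M1" and M2: "is_struct M2" and s: "sig Z U q M1 = sig Z U q M2"
    and b: "big U q M1 = {}"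
  shows "th Z U M1 = th Z U M2"
proof -
  have b2: "big U q M2 = {}" using b sig_big[OF s] by simp
  have small: "finite (CS U M S) \<and> card (CS U M S) = tc q (CS U M S)"
    if "big U q M = {}" "S \<subseteq> U" for M :: "'s struct" and S
  proof -
    have "tc q (CS U M S) \<noteq> q" using that by (auto simp: big_def)
    then have "tc q (CS U M S) < q" using tc_le[of q "CS U M S"] by simp
    then show ?thesis using tc_small by blast
  qed
  have tcq: "tc q' (CS U M1 S) = tc q' (CS U M2 S)" for q' S
  proof (cases "S \<subseteq> U")
    case False then show ?thesis by (simp add: CS_notsub)
  next
    case True
    have c1: "finite (CS U M1 S)" "card (CS U M1 S) = tc q (CS U M1 S)" using small[OF b True] by auto
    have c2: "finite (CS U M2 S)" "card (CS U M2 S) = tc q (CS U M2 S)" using small[OF b2 True] by auto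
    have "card (CS U M1 S) = card (CS U M2 S)" unfolding c1(2) c2(2) by (rule sig_tc[OF s])
    then show ?thesis using c1(1) c2(1) by (simp add: tc_def)
  qed
  have P: "\<forall>p\<in>Z. fst (snd M1) p = fst (snd M2) p" by (rule sig_P0[OF s])
  show ?thesis
  proof
    show "th Z U M1 \<subseteq> th Z U M2"
      using qe_sent[OF _ order.refl M1 P] tcq by (auto simp: in_th)
    have P': "\<forall>p\<in>Z. fst (snd M2) p = fst (snd M1) p" using P by simp
    have tcq': "\<forall>S. tc q' (CS U M2 S) = tc q' (CS U M1 S)" for q' using tcq by simp
    show "th Z U M2 \<subseteq> th Z U M1"
      using qe_sent[OF _ order.refl M2 P' tcq'] by (auto simp: in_th)
  qed
qed


lemma pigeon:
  assumes "finite X" "\<forall>i. (f :: nat \<Rightarrow> 'a) i \<in> X"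
  shows "\<exists>i j. i \<noteq> j \<and> f i = f j"
proof (rule ccontr)
  assume "\<not> ?thesis"
  then have "inj f" by (auto intro: injI)
  then have "infinite X" using assms(2) infinite_from_inj by blast
  then show False using assms(1) by simp
qed

lemma big_fin: "finite U \<Longrightarrow> finite (big U q M)"
  unfolding big_def by simp

lemma big_mono: "q \<le> q' \<Longrightarrow> big U q' M \<subseteq> big U q M"
  unfolding big_def using tc_big by blast

lemma upper:
  fixes Z U :: "'s set"
  assumes finZ: "finite Z" and finU: "finite U"
  shows "1 \<le> j \<Longrightarrow> G \<subseteq> all_theories Z U \<Longrightarrow> rs_ge Z U G j \<Longrightarrow>
    \<exists>M. is_struct M \<and> th Z U M \<in> G \<and> j \<le> card (big U q M)"
proof (induction j arbitrary: G q)
  case 0 then show ?case by simp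
next
  case (Suc j)
  show ?case
  proof (cases j)
    case 0
    then have infG: "infinite G" using Suc.prems(3) by (simp add: rs_ge_1)
    show ?thesis
    proof (rule ccontr)
      assume "\<not> ?thesis"
      then have nb: "\<And>M. is_struct M \<Longrightarrow> th Z U M \<in> G \<Longrightarrow> big U q M = {}"
        using 0 big_fin[OF finU] by (metis One_nat_def Suc_leI card_gt_0_iff)
      define pick where "pick T = (SOME M. is_struct M \<and> T = th Z U M)" for T
      have pk: "is_struct (pick T) \<and> T = th Z U (pick T)" if "T \<in> G" for T
      proof -
        have "T \<in> th Z U ` {M. is_struct M}" using that Suc.prems(2) unfolding all_theories_eq by blast
        then have "\<exists>M. is_struct M \<and> T = th Z U M" by blast
        then show ?thesis unfolding pick_def by (rule someI_ex)
      qed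
      have "inj_on (\<lambda>T. sig Z U q (pick T)) G"
      proof (rule inj_onI)
        fix T1 T2 assume T: "T1 \<in> G" "T2 \<in> G" and s: "sig Z U q (pick T1) = sig Z U q (pick T2)"
        have p1: "is_struct (pick T1)" "T1 = th Z U (pick T1)" using pk[OF T(1)] by auto
        have p2: "is_struct (pick T2)" "T2 = th Z U (pick T2)" using pk[OF T(2)] by auto
        have "th Z U (pick T1) \<in> G" using p1(2) T(1) by simp
        then have b1: "big U q (pick T1) = {}" by (rule nb[OF p1(1)])
        have "th Z U (pick T1) = th Z U (pick T2)"
          by (rule same_th[OF p1(1) p2(1) s b1])
        then show "T1 = T2" using pk[OF T(1)] pk[OF T(2)] by simp
      qed
      moreover have "(\<lambda>T. sig Z U q (pick T)) ` G \<subseteq> Pow Z \<times> Pow (Pow U \<times> {..q})"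
        using sig_in by blast
      then have "finite ((\<lambda>T. sig Z U q (pick T)) ` G)"
        by (rule finite_subset) (rule finite_sigset[OF finZ finU])
      ultimately have "finite G" using finite_imageD by blast
      then show False using infG by simp
    qed
  next
    case (Suc n)
    obtain \<phi> :: "nat \<Rightarrow> 's fm" where \<phi>s: "\<forall>i. \<phi> i \<in> sentences Z U" and \<phi>i: "\<forall>i j. i \<noteq> j \<longrightarrow> inconsistent2 (\<phi> i) (\<phi> j)"
      and \<phi>r: "\<forall>i. rs_ge Z U (restr G (\<phi> i)) (Suc n)"
      using Suc.prems(3) unfolding \<open>j = Suc n\<close> rs_ge_SS by blast
    have "\<forall>i. \<exists>M. is_struct M \<and> th Z U M \<in> restr G (\<phi> i) \<and> Suc n \<le> card (big U (max q (depth (\<phi> i))) M)"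
    proof
      fix i
      have "restr G (\<phi> i) \<subseteq> all_theories Z U" using Suc.prems(2) by (auto simp: restr_def)
      then show "\<exists>M. is_struct M \<and> th Z U M \<in> restr G (\<phi> i) \<and> Suc n \<le> card (big U (max q (depth (\<phi> i))) M)"
        using Suc.IH[unfolded \<open>j = Suc n\<close>, of "restr G (\<phi> i)" "max q (depth (\<phi> i))"] \<phi>r by simp
    qed
    then obtain Mf :: "nat \<Rightarrow> 's struct" where Mf: "\<And>i. is_struct (Mf i)" "\<And>i. th Z U (Mf i) \<in> restr G (\<phi> i)"
      "\<And>i. Suc n \<le> card (big U (max q (depth (\<phi> i))) (Mf i))"
      by metis
    show ?thesis
    proof (rule ccontr)
      assume "\<not> ?thesis"
      then have H: "\<And>M. is_struct M \<Longrightarrow> th Z U M \<in> G \<Longrightarrow> card (big U q M) \<le> Suc n"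
        using \<open>j = Suc n\<close> by fastforce
      have mi: "models (Mf i) (\<phi> i)" for i using Mf(2)[of i] by (simp add: restr_def in_th)
      have bq: "big U q (Mf i) = big U (max q (depth (\<phi> i))) (Mf i)" for i
      proof -
        have sub: "big U (max q (depth (\<phi> i))) (Mf i) \<subseteq> big U q (Mf i)" by (rule big_mono) simp
        have inG: "th Z U (Mf i) \<in> G" using Mf(2)[of i] by (simp add: restr_def)
        have "card (big U q (Mf i)) \<le> card (big U (max q (depth (\<phi> i))) (Mf i))"
          by (rule le_trans[OF H[OF Mf(1) inG] Mf(3)[of i]])
        moreover have "card (big U (max q (depth (\<phi> i))) (Mf i)) \<le> card (big U q (Mf i))"
          by (rule card_mono[OF big_fin[OF finU] sub])
        ultimately have "card (big U (max q (depth (\<phi> i))) (Mf i)) = card (big U q (Mf i))"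
          by (rule antisym[rotated])
        then have "big U (max q (depth (\<phi> i))) (Mf i) = big U q (Mf i)"
          by (rule card_subset_eq[OF big_fin[OF finU] sub])
        then show ?thesis by (rule sym)
      qed
      have ne: "big U q (Mf i) \<noteq> {}" for i
      proof -
        have "Suc n \<le> card (big U q (Mf i))" using Mf(3)[of i] bq[of i] by simp
        then show ?thesis by (intro notI) simp
      qed
      have st: "models (star Z U q (Mf i)) (\<phi> i)" for i
        using to_star[OF finU Mf(1) max.cobounded1 bq ne \<phi>s[rule_format] max.cobounded2 mi] by simp
      obtain i1 i2 where ii: "i1 \<noteq> i2" "sig Z U q (Mf i1) = sig Z U q (Mf i2)"
        using pigeon[OF finite_sigset[OF finZ finU, of q], of "\<lambda>i. sig Z U q (Mf i)"] sig_in by blast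
      have "star Z U q (Mf i1) = star Z U q (Mf i2)" by (rule sig_star[OF ii(2)])
      then have "models (star Z U q (Mf i1)) (\<phi> i1)" "models (star Z U q (Mf i1)) (\<phi> i2)"
        using st[of i1] st[of i2] by simp_all
      moreover have "is_struct (star Z U q (Mf i1))"
        using to_star[OF finU Mf(1) max.cobounded1 bq ne \<phi>s[rule_format] max.cobounded2 mi] by simp
      ultimately show False using \<phi>i ii(1) unfolding inconsistent2_def by blast
    qed
  qed
qed


definition Aat :: "'s set \<Rightarrow> (nat \<Rightarrow> 's) \<Rightarrow> nat \<Rightarrow> 's fm" where
  "Aat Z sy i = (if sy i \<in> Z then Prop (sy i) else Ex 0 (Pred (sy i) 0))"

definition tv :: "'s set \<Rightarrow> (nat \<Rightarrow> 's) \<Rightarrow> 's struct \<Rightarrow> nat \<Rightarrow> bool" where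
  "tv Z sy M i = (if sy i \<in> Z then fst (snd M) (sy i) else (\<exists>d\<in>fst M. snd (snd M) (sy i) d))"

fun psi :: "'s set \<Rightarrow> (nat \<Rightarrow> 's) \<Rightarrow> nat \<Rightarrow> bool list \<Rightarrow> 's fm" where
  "psi Z sy k [] = Top"
| "psi Z sy k (b # l) = Conj (if b then Aat Z sy k else Neg (Aat Z sy k)) (psi Z sy (Suc k) l)"

lemma sat_Aat: "sat (D, A, B) e (Aat Z sy i) = tv Z sy (D, A, B) i"
  by (simp add: Aat_def tv_def)

lemma sat_psi: "D \<noteq> {} \<Longrightarrow> sat (D, A, B) e (psi Z sy k l) \<longleftrightarrow> (\<forall>i<length l. tv Z sy (D, A, B) (k + i) = l ! i)"
proof (induction l arbitrary: k)
  case Nil then show ?case by (simp add: Top_sat)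
next
  case (Cons b l)
  have "(\<forall>i<length (b # l). tv Z sy (D, A, B) (k + i) = (b # l) ! i) \<longleftrightarrow>
        tv Z sy (D, A, B) k = b \<and> (\<forall>i<length l. tv Z sy (D, A, B) (Suc k + i) = l ! i)"
    by (auto simp: less_Suc_eq_0_disj)
  moreover have "sat (D, A, B) e (psi Z sy k (b # l)) \<longleftrightarrow>
        tv Z sy (D, A, B) k = b \<and> (\<forall>i<length l. tv Z sy (D, A, B) (Suc k + i) = l ! i)"
    using Cons.IH[OF Cons.prems] by (cases b) (simp_all add: sat_Aat)
  ultimately show ?case by simp
qed

lemma psi_sentence:
  assumes "range sy \<subseteq> Z \<union> U"
  shows "psi Z sy k l \<in> sentences Z U"
proof -
  have "in_lang Z U (Aat Z sy i) \<and> freevars (Aat Z sy i) = {}" for i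
    using assms by (auto simp: Aat_def)
  then show ?thesis by (induction l arbitrary: k) (auto simp: sentences_def fv_Top lang_Top)
qed

lemma models_psi:
  fixes M :: "'s struct"
  assumes "is_struct M" "range sy \<subseteq> Z \<union> U"
  shows "models M (psi Z sy 0 l) \<longleftrightarrow> (\<forall>i<length l. tv Z sy M i = l ! i)"
proof -
  obtain D A B where M: "M = (D, A, B)" by (cases M)
  obtain e :: "nat \<Rightarrow> 's \<times> nat" where e: "range e \<subseteq> fst M" using struct_assign[OF assms(1)] by blast
  have "models M (psi Z sy 0 l) = sat M e (psi Z sy 0 l)"
    by (rule models_iff[OF assms(1) _ e]) (use psi_sentence[OF assms(2), of 0 l] in \<open>simp add: sentences_def\<close>)
  then show ?thesis using sat_psi[of D A B e Z sy 0 l] assms(1) M by (simp add: is_struct_def)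
qed

lemma models_Aat:
  fixes M :: "'s struct"
  assumes "is_struct M" 
  shows "models M (Aat Z sy i) \<longleftrightarrow> tv Z sy M i"
proof -
  obtain D A B where M: "M = (D, A, B)" by (cases M)
  obtain e :: "nat \<Rightarrow> 's \<times> nat" where e: "range e \<subseteq> fst M" using struct_assign[OF assms(1)] by blast
  have "models M (Aat Z sy i) = sat M e (Aat Z sy i)"
    by (rule models_iff[OF assms(1) _ e]) (simp add: Aat_def)
  then show ?thesis using sat_Aat M by simp
qed

lemma th_tv:
  fixes M M' :: "'s struct"
  assumes "is_struct M" "is_struct M'" "range sy \<subseteq> Z \<union> U" "th Z U M = th Z U M'"
  shows "tv Z sy M i = tv Z sy M' i"
proof -
  have s: "Aat Z sy i \<in> sentences Z U" using assms(3) by (auto simp: Aat_def sentences_def)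
  have "tv Z sy M i = (Aat Z sy i \<in> th Z U M)" using models_Aat[OF assms(1)] s by (simp add: in_th)
  also have "\<dots> = (Aat Z sy i \<in> th Z U M')" using assms(4) by simp
  also have "\<dots> = tv Z sy M' i" using models_Aat[OF assms(2)] s by (simp add: in_th)
  finally show ?thesis .
qed

definition mkl :: "'s set \<Rightarrow> (nat \<Rightarrow> 's) \<Rightarrow> bool list \<Rightarrow> 's struct" where
  "mkl Z sy l = ({(undefined, 0)}, \<lambda>p. \<exists>i<length l. sy i = p \<and> l ! i,
      \<lambda>P d. \<exists>i<length l. sy i = P \<and> sy i \<notin> Z \<and> l ! i)"

lemma mkl_struct: "is_struct (mkl Z sy l)" by (simp add: mkl_def is_struct_def)

lemma tv_mkl:
  assumes "inj sy" "i < length l"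
  shows "tv Z sy (mkl Z sy l) i = l ! i"
proof -
  have "\<And>i'. (sy i' = sy i) = (i' = i)" using assms(1) by (auto dest: injD)
  then show ?thesis using assms(2) by (auto simp: tv_def mkl_def)
qed

definition ext :: "bool list \<Rightarrow> nat \<Rightarrow> bool list" where
  "ext l n = l @ replicate n True @ [False]"

lemma ext_len: "length (ext l n) = length l + n + 1" by (simp add: ext_def)

lemma ext_prefix: "i < length l \<Longrightarrow> ext l n ! i = l ! i" by (simp add: ext_def nth_append)

lemma ext_at: "m \<le> n \<Longrightarrow> ext l n ! (length l + m) = (m < n)"
  by (auto simp: ext_def nth_append nth_Cons')


lemma rs_step_c1: "is_least a \<Longrightarrow> rs_step Z U R a F = (F \<noteq> {})"
  by (simp add: rs_step_def)

lemma rs_step_c2: "\<not> is_least a \<Longrightarrow> (\<exists>b. is_least b \<and> is_succ_of a b) \<Longrightarrow> rs_step Z U R a F = infinite F"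
  by (simp add: rs_step_def)

lemma rs_step_c3: "\<not> is_least a \<Longrightarrow> \<not> (\<exists>b. is_least b \<and> is_succ_of a b) \<Longrightarrow> (\<exists>b. is_succ_of a b) \<Longrightarrow>
  rs_step Z U R a F = (\<exists>\<phi>::nat \<Rightarrow> 's fm. (\<forall>n. \<phi> n \<in> sentences Z U)
          \<and> (\<forall>i j. i \<noteq> j \<longrightarrow> inconsistent2 (\<phi> i) (\<phi> j))
          \<and> (\<forall>n. R (THE b. is_succ_of a b) (restr F (\<phi> n))))"
  unfolding rs_step_def by (simp only: if_False if_True simp_thms)

lemma rs_step_c4: "\<not> is_least a \<Longrightarrow> \<not> (\<exists>b. is_succ_of a b) \<Longrightarrow> rs_step Z U R a F = (\<forall>b<a. R b F)"
  unfolding rs_step_def by (simp only: if_False if_True simp_thms) auto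

definition Gset :: "'s set \<Rightarrow> 's set \<Rightarrow> (nat \<Rightarrow> 's) \<Rightarrow> bool list \<Rightarrow> 's fm set set" where
  "Gset Z U sy l = {th Z U M | M. is_struct M \<and> (\<forall>i<length l. tv Z sy M i = l ! i)}"

lemma the_succ_lt:
  fixes a :: "'o::wellorder"
  assumes "is_succ_of a b" shows "(THE b. is_succ_of a b) < a"
proof -
  have "(THE b. is_succ_of a b) = b" by (rule succ_unique[OF assms])
  then show ?thesis using assms by (simp add: is_succ_of_def)
qed

lemma Gset_ext: "Gset Z U sy (ext l n) \<subseteq> Gset Z U sy l"
proof
  fix x assume "x \<in> Gset Z U sy (ext l n)"
  then obtain M where M: "x = th Z U M" "is_struct M" "\<forall>i<length (ext l n). tv Z sy M i = ext l n ! i"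
    unfolding Gset_def by blast
  have "\<forall>i<length l. tv Z sy M i = l ! i"
  proof (intro allI impI)
    fix i assume i: "i < length l"
    then have "i < length (ext l n)" by (simp add: ext_len)
    then show "tv Z sy M i = l ! i" using M(3) ext_prefix[OF i] by simp
  qed
  then show "x \<in> Gset Z U sy l" unfolding Gset_def using M(1,2) by blast
qed

lemma mkl_in: "inj sy \<Longrightarrow> th Z U (mkl Z sy l) \<in> Gset Z U sy l"
  unfolding Gset_def by (rule CollectI, rule exI[of _ "mkl Z sy l"]) (simp add: mkl_struct tv_mkl)

lemma tv_ext_diff:
  assumes M: "\<forall>i<length (ext l n). tv Z sy M i = ext l n ! i"
    and M': "\<forall>i<length (ext l n'). tv Z sy M' i = ext l n' ! i" and nn: "n < n'"
  shows "tv Z sy M (length l + n) \<noteq> tv Z sy M' (length l + n)"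
proof -
  have "tv Z sy M (length l + n) = False" using M ext_at[of n n l] ext_len[of l n] by simp
  moreover have "tv Z sy M' (length l + n) = True" using M' ext_at[of n n' l] ext_len[of l n'] nn by simp
  ultimately show ?thesis by simp
qed

lemma infinite_rank:
  fixes Z U :: "'s set" and a :: "'o::wellorder"
  assumes sy: "inj sy" "range sy \<subseteq> Z \<union> U"
  shows "\<forall>l G. Gset Z U sy l \<subseteq> G \<longrightarrow> rs_ge Z U G a"
proof (induction a rule: less_induct)
  case (less a)
  show ?case
  proof (intro allI impI)
    fix l G assume sub: "Gset Z U sy l \<subseteq> G"
    define T where "T n = th Z U (mkl Z sy (ext l n))" for n
    have TG: "T n \<in> G" for n
      using mkl_in[OF sy(1), of Z U "ext l n"] Gset_ext[of Z U sy l n] sub unfolding T_def by blast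
    have Tinj: "inj T"
    proof (rule injI)
      fix n n' assume eq: "T n = T n'"
      show "n = n'"
      proof (rule ccontr)
        assume "n \<noteq> n'"
        then consider "n < n'" | "n' < n" by linarith
        then show False
        proof cases
          case 1
          have "tv Z sy (mkl Z sy (ext l n)) (length l + n) \<noteq> tv Z sy (mkl Z sy (ext l n')) (length l + n)"
            by (rule tv_ext_diff[OF _ _ 1]) (simp_all add: tv_mkl[OF sy(1)])
          moreover have "tv Z sy (mkl Z sy (ext l n)) (length l + n) = tv Z sy (mkl Z sy (ext l n')) (length l + n)"
            by (rule th_tv[OF mkl_struct mkl_struct sy(2)]) (use eq in \<open>simp add: T_def\<close>)
          ultimately show False by simp
        next
          case 2
          have "tv Z sy (mkl Z sy (ext l n')) (length l + n') \<noteq> tv Z sy (mkl Z sy (ext l n)) (length l + n')"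
            by (rule tv_ext_diff[OF _ _ 2]) (simp_all add: tv_mkl[OF sy(1)])
          moreover have "tv Z sy (mkl Z sy (ext l n')) (length l + n') = tv Z sy (mkl Z sy (ext l n)) (length l + n')"
            by (rule th_tv[OF mkl_struct mkl_struct sy(2)]) (use eq in \<open>simp add: T_def\<close>)
          ultimately show False by simp
        qed
      qed
    qed
    have infG: "infinite G" by (rule infinite_from_inj[OF Tinj]) (use TG in blast)
    define \<phi> where "\<phi> n = psi Z sy 0 (ext l n)" for n
    have \<phi>s: "\<forall>n. \<phi> n \<in> sentences Z U" unfolding \<phi>_def using psi_sentence[OF sy(2)] by blast
    have \<phi>i: "\<forall>i j. i \<noteq> j \<longrightarrow> inconsistent2 (\<phi> i) (\<phi> j)"
    proof (intro allI impI)
      fix i j :: nat assume ij: "i \<noteq> j"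
      show "inconsistent2 (\<phi> i) (\<phi> j)"
      proof (rule inconsistentI)
        fix M :: "'s struct" assume M: "is_struct M" "models M (\<phi> i)" "models M (\<phi> j)"
        have mi: "\<forall>k<length (ext l i). tv Z sy M k = ext l i ! k" using M(2) models_psi[OF M(1) sy(2)] \<phi>_def by simp
        have mj: "\<forall>k<length (ext l j). tv Z sy M k = ext l j ! k" using M(3) models_psi[OF M(1) sy(2)] \<phi>_def by simp
        from ij consider "i < j" | "j < i" by linarith
        then show False
        proof cases
          case 1 show False using tv_ext_diff[OF mi mj 1] by simp
        next
          case 2 show False using tv_ext_diff[OF mj mi 2] by simp
        qed
      qed
    qed
    have \<phi>r: "Gset Z U sy (ext l n) \<subseteq> restr G (\<phi> n)" for n
    proof
      fix x assume x: "x \<in> Gset Z U sy (ext l n)"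
      then have "x \<in> G" using Gset_ext sub by blast
      moreover obtain M where M: "x = th Z U M" "is_struct M" "\<forall>i<length (ext l n). tv Z sy M i = ext l n ! i"
        using x unfolding Gset_def by blast
      then have "\<phi> n \<in> x" using \<phi>s models_psi[OF M(2) sy(2)] by (simp add: \<phi>_def in_th)
      ultimately show "x \<in> restr G (\<phi> n)" by (simp add: restr_def)
    qed
    show "rs_ge Z U G a"
    proof (subst rs_ge_unfold)
      show "rs_step Z U (\<lambda>b G. rs_ge Z U G b) a G"
      proof (cases "is_least a")
        case True
        have "T 0 \<in> G" by (rule TG)
        then show ?thesis using True by (simp add: rs_step_c1) blast
      next
        case nl: False
        show ?thesis
        proof (cases "\<exists>b. is_least b \<and> is_succ_of a b")
          case True
          then show ?thesis using nl infG by (simp add: rs_step_c2)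
        next
          case nl1: False
          show ?thesis
          proof (cases "\<exists>b. is_succ_of a b")
            case True
            then obtain b where b: "is_succ_of a b" by blast
            have lt: "(THE b. is_succ_of a b) < a" by (rule the_succ_lt[OF b])
            have "\<forall>n. rs_ge Z U (restr G (\<phi> n)) (THE b. is_succ_of a b)"
              using less.IH[OF lt] \<phi>r by blast
            then show ?thesis unfolding rs_step_c3[OF nl nl1 True] using \<phi>s \<phi>i by blast
          next
            case False
            have "\<forall>b<a. rs_ge Z U G b" using less.IH sub by blast
            then show ?thesis unfolding rs_step_c4[OF nl False] .
          qed
        qed
      qed
    qed
  qed
qed


lemma not_ge_top:
  fixes Z U :: "'s set"
  assumes finZ: "finite Z" and finU: "finite U" and G: "G \<subseteq> all_theories Z U"
  shows "\<not> rs_ge Z U G (Suc (card (Pow U)))"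
proof
  assume "rs_ge Z U G (Suc (card (Pow U)))"
  then have "\<exists>M. is_struct M \<and> th Z U M \<in> G \<and> Suc (card (Pow U)) \<le> card (big U 0 M)"
    using upper[OF finZ finU _ G] by simp
  then obtain M :: "'s struct" where "Suc (card (Pow U)) \<le> card (big U 0 M)" by blast
  moreover have "card (big U 0 M) \<le> card (Pow U)"
    by (rule card_mono) (auto simp: finU big_def)
  ultimately show False by simp
qed

lemma star_full:
  assumes "big U q M = Pow U"
  shows "star Z U q M = mk U {p \<in> Z. fst (snd M) p} (\<lambda>S. if S \<in> Pow U then UNIV else {})"
proof -
  have "(\<lambda>S. if S \<in> big U q M then UNIV else {..< tc q (CS U M S)}) = (\<lambda>S. if S \<in> Pow U then UNIV else {})"
  proof
    fix S
    show "(if S \<in> big U q M then UNIV else {..< tc q (CS U M S)}) = (if S \<in> Pow U then UNIV else {})"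
      using assms CS_notsub[of S U M] by (simp add: tc_empty)
  qed
  then show ?thesis unfolding star_def by simp
qed

lemma finite_part:
  fixes Z U :: "'s set"
  assumes finZ: "finite Z" and finU: "finite U"
  shows "rs_eq Z U (all_theories Z U) (2 ^ card U) \<and> ds_eq Z U (all_theories Z U) (2 ^ card Z)"
proof -
  obtain us where us: "set us = U" using finite_list[OF finU] by blast
  obtain zs where zs: "set zs = Z" using finite_list[OF finZ] by blast
  define N where "N = card (Pow U)"
  have N: "N = 2 ^ card U" unfolding N_def by (simp add: card_Pow finU)
  have N1: "1 \<le> N" unfolding N by simp
  have cN: "card (Pow U) = N" by (simp add: N_def)
  define F where "F = all_theories Z U"
  define KU :: "'s set \<Rightarrow> nat set" where "KU S = (if S \<in> Pow U then UNIV else {})" for S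
  have st_mk: "is_struct (mk U z K')" if "\<forall>S\<in>Pow U. \<exists>c\<ge>1. K' S = {..<c}" for z and K' :: "'s set \<Rightarrow> nat set"
  proof -
    have "{} \<in> Pow U" by simp
    from bspec[OF that this] obtain c where "c \<ge> 1" "K' {} = {..<c}" by blast
    then have ne: "K' {} \<noteq> {}" using lessThan_ne by simp
    show ?thesis by (rule mk_struct[of "{}" U K' z]) (simp_all add: ne)
  qed
  have low: "rs_ge Z U G N" if "\<And>K'. \<forall>S\<in>Pow U. \<exists>c\<ge>1. K' S = {..<c} \<Longrightarrow> th Z U (mk U z K') \<in> G"
    for G z
  proof (rule lower[OF finU us N1 cN order.refl order.refl])
    show "{th Z U (mk U z K') | K'. (\<forall>S. S \<notin> Pow U \<longrightarrow> K' S = KU S) \<and> (\<forall>S\<in>Pow U. \<exists>c\<ge>1. K' S = {..<c})} \<subseteq> G"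
    proof
      fix x assume "x \<in> {th Z U (mk U z K') | K'. (\<forall>S. S \<notin> Pow U \<longrightarrow> K' S = KU S) \<and> (\<forall>S\<in>Pow U. \<exists>c\<ge>1. K' S = {..<c})}"
      then obtain K' where x: "x = th Z U (mk U z K')" and K': "\<forall>S\<in>Pow U. \<exists>c\<ge>1. K' S = {..<c}"
        by blast
      show "x \<in> G" unfolding x by (rule that[OF K'])
    qed
  qed
  have rsF: "rs_eq Z U F N"
    unfolding rs_eq_def
  proof
    show "rs_ge Z U F N" by (rule low[where z="{}"]) (simp add: F_def th_in_all st_mk)
    show "\<not> rs_ge Z U F (Suc N)" unfolding F_def N_def by (rule not_ge_top[OF finZ finU order.refl])
  qed
  have zeta_s: "zeta zs z \<in> sentences Z U" for z using zeta_sentence[of zs Z z U] zs by simp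
  have mz: "models M (zeta zs z) \<longleftrightarrow> (\<forall>p\<in>Z. fst (snd M) p = (p \<in> z))" if "is_struct M" for M :: "'s struct" and z
    by (rule models_zeta[OF zs that])
  have stU: "is_struct (mk U z KU)" for z by (rule mk_struct[of "{}"]) (simp_all add: KU_def)
  have zinj: "inj_on (zeta zs) (Pow Z)"
  proof (rule inj_onI)
    fix z1 z2 assume z: "z1 \<in> Pow Z" "z2 \<in> Pow Z" and eq: "zeta zs z1 = zeta zs z2"
    have "models (mk U z1 KU) (zeta zs z1)" using mz[OF stU] by (simp add: mk_P0)
    then have "models (mk U z1 KU) (zeta zs z2)" using eq by simp
    then have "\<forall>p\<in>Z. (p \<in> z1) = (p \<in> z2)" using mz[OF stU] by (simp add: mk_P0)
    then show "z1 = z2" using z by auto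
  qed
  have restr_eq: "rs_eq Z U (restr F (zeta zs z)) N" for z
    unfolding rs_eq_def
  proof
    show "rs_ge Z U (restr F (zeta zs z)) N"
    proof (rule low[where z=z])
      fix K' :: "'s set \<Rightarrow> nat set" assume "\<forall>S\<in>Pow U. \<exists>c\<ge>1. K' S = {..<c}"
      then have s: "is_struct (mk U z K')" by (rule st_mk)
      have "zeta zs z \<in> th Z U (mk U z K')" using zeta_s mz[OF s] by (simp add: in_th mk_P0)
      then show "th Z U (mk U z K') \<in> restr F (zeta zs z)" using th_in_all[OF s] by (simp add: restr_def F_def)
    qed
    show "\<not> rs_ge Z U (restr F (zeta zs z)) (Suc N)"
      unfolding N_def by (rule not_ge_top[OF finZ finU]) (auto simp: restr_def F_def)
  qed
  have ex: "\<exists>\<Phi>. finite \<Phi> \<and> card \<Phi> = 2 ^ card Z \<and> \<Phi> \<subseteq> sentences Z U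
        \<and> (\<forall>f\<in>\<Phi>. \<forall>g\<in>\<Phi>. f \<noteq> g \<longrightarrow> inconsistent2 f g)
        \<and> (\<forall>f\<in>\<Phi>. rs_eq Z U (restr F f) N)"
  proof (intro exI conjI)
    show "finite (zeta zs ` Pow Z)" using finZ by simp
    show "card (zeta zs ` Pow Z) = 2 ^ card Z" using card_image[OF zinj] card_Pow[of Z] finZ by simp
    show "zeta zs ` Pow Z \<subseteq> sentences Z U" using zeta_s by blast
    show "\<forall>f\<in>zeta zs ` Pow Z. \<forall>g\<in>zeta zs ` Pow Z. f \<noteq> g \<longrightarrow> inconsistent2 f g"
    proof (intro ballI impI)
      fix f g assume f: "f \<in> zeta zs ` Pow Z" and g: "g \<in> zeta zs ` Pow Z" and fg: "f \<noteq> g"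
      obtain z1 where z1: "z1 \<in> Pow Z" "f = zeta zs z1" using f by blast
      obtain z2 where z2: "z2 \<in> Pow Z" "g = zeta zs z2" using g by blast
      show "inconsistent2 f g"
      proof (rule inconsistentI)
        fix M :: "'s struct" assume M: "is_struct M" "models M f" "models M g"
        then have "\<forall>p\<in>Z. (p \<in> z1) = (p \<in> z2)" using mz[OF M(1)] z1 z2 by simp
        then have "z1 = z2" using z1 z2 by auto
        then show False using fg z1 z2 by simp
      qed
    qed
    show "\<forall>f\<in>zeta zs ` Pow Z. rs_eq Z U (restr F f) N" using restr_eq by blast
  qed
  have ub: "finite \<Phi> \<and> card \<Phi> \<le> 2 ^ card Z"
    if \<Phi>: "\<Phi> \<subseteq> sentences Z U" "\<forall>f\<in>\<Phi>. \<forall>g\<in>\<Phi>. f \<noteq> g \<longrightarrow> inconsistent2 f g"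
      "\<forall>f\<in>\<Phi>. rs_eq Z U (restr F f) N" for \<Phi>
  proof -
    have "\<forall>f\<in>\<Phi>. \<exists>M. is_struct M \<and> th Z U M \<in> restr F f \<and> N \<le> card (big U (depth f) M)"
    proof
      fix f assume f: "f \<in> \<Phi>"
      have "restr F f \<subseteq> all_theories Z U" by (auto simp: restr_def F_def)
      then show "\<exists>M. is_struct M \<and> th Z U M \<in> restr F f \<and> N \<le> card (big U (depth f) M)"
        using upper[OF finZ finU N1, of "restr F f" "depth f"] \<Phi>(3) f by (simp add: rs_eq_def)
    qed
    then obtain Mf :: "'s fm \<Rightarrow> 's struct" where Mf: "\<And>f. f \<in> \<Phi> \<Longrightarrow> is_struct (Mf f)"
      "\<And>f. f \<in> \<Phi> \<Longrightarrow> th Z U (Mf f) \<in> restr F f" "\<And>f. f \<in> \<Phi> \<Longrightarrow> N \<le> card (big U (depth f) (Mf f))"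
      by metis
    define zf where "zf f = {p \<in> Z. fst (snd (Mf f)) p}" for f
    have key: "models (mk U (zf f) KU) f" if f: "f \<in> \<Phi>" for f
    proof -
      have bs: "big U (depth f) (Mf f) \<subseteq> Pow U" by (auto simp: big_def)
      have bf: "big U (depth f) (Mf f) = Pow U"
        by (rule card_subset_eq[OF _ bs]) (use finU Mf(3)[OF f] card_mono[OF _ bs] cN in auto)
      have mf: "models (Mf f) f" using Mf(2)[OF f] by (simp add: restr_def in_th)
      have fs: "f \<in> sentences Z U" using f \<Phi>(1) by blast
      have "{} \<in> big U (depth f) (Mf f)" using bf by simp
      then have ne: "big U (depth f) (Mf f) \<noteq> {}" by blast
      have "models (star Z U (depth f) (Mf f)) f"
        using to_star[OF finU Mf(1)[OF f] order.refl refl ne fs order.refl mf] by simp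
      moreover have KUe: "KU = (\<lambda>S. if S \<in> Pow U then UNIV else {})" by (rule ext) (simp add: KU_def)
      ultimately show ?thesis using star_full[OF bf] by (simp add: zf_def)
    qed
    have inj: "inj_on zf \<Phi>"
    proof (rule inj_onI)
      fix f g assume f: "f \<in> \<Phi>" and g: "g \<in> \<Phi>" and eq: "zf f = zf g"
      show "f = g"
      proof (rule ccontr)
        assume "f \<noteq> g"
        then have "inconsistent2 f g" using \<Phi>(2) f g by blast
        then have nm: "\<not> (is_struct (mk U (zf f) KU) \<and> models (mk U (zf f) KU) f \<and> models (mk U (zf f) KU) g)"
          unfolding inconsistent2_def by (rule contrapos_nn) (rule exI)
        moreover have "models (mk U (zf f) KU) f" "models (mk U (zf f) KU) g" using key[OF f] key[OF g] eq by simp_all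
        ultimately show False using stU[of "zf f"] by simp
      qed
    qed
    have sub: "zf ` \<Phi> \<subseteq> Pow Z" by (auto simp: zf_def)
    have fP: "finite (Pow Z)" using finZ by simp
    have fi: "finite (zf ` \<Phi>)" by (rule finite_subset[OF sub fP])
    have "finite \<Phi>" by (rule finite_imageD[OF fi inj])
    moreover have "card \<Phi> \<le> card (Pow Z)" by (rule card_inj_on_le[OF inj sub fP])
    ultimately show ?thesis by (simp add: card_Pow finZ)
  qed
  have "ds_eq Z U F (2 ^ card Z)"
    unfolding ds_eq_def
  proof (rule exI[of _ N], intro conjI)
    show "rs_eq Z U F N" by (rule rsF)
    show "\<exists>\<Phi>. finite \<Phi> \<and> card \<Phi> = 2 ^ card Z \<and> \<Phi> \<subseteq> sentences Z U
        \<and> (\<forall>f\<in>\<Phi>. \<forall>g\<in>\<Phi>. f \<noteq> g \<longrightarrow> inconsistent2 f g)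
        \<and> (\<forall>f\<in>\<Phi>. rs_eq Z U (restr F f) N)" by (rule ex)
    show "\<forall>\<Phi>. \<Phi> \<subseteq> sentences Z U \<and> (\<forall>f\<in>\<Phi>. \<forall>g\<in>\<Phi>. f \<noteq> g \<longrightarrow> inconsistent2 f g)
        \<and> (\<forall>f\<in>\<Phi>. rs_eq Z U (restr F f) N) \<longrightarrow> finite \<Phi> \<and> card \<Phi> \<le> 2 ^ card Z"
    proof (intro allI impI)
      fix \<Phi> assume h: "\<Phi> \<subseteq> sentences Z U \<and> (\<forall>f\<in>\<Phi>. \<forall>g\<in>\<Phi>. f \<noteq> g \<longrightarrow> inconsistent2 f g)
        \<and> (\<forall>f\<in>\<Phi>. rs_eq Z U (restr F f) N)"
      show "finite \<Phi> \<and> card \<Phi> \<le> 2 ^ card Z"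
        by (rule ub) (use h in simp_all)
    qed
  qed
  then show ?thesis using rsF N F_def by simp
qed

theorem proposition2p3:
  fixes Z U :: "'s set"
  assumes "Z \<inter> U = {}"
      and "U \<noteq> {}"
  shows "(finite Z \<and> finite U \<longrightarrow>
            rs_eq Z U (all_theories Z U) (2 ^ card U)
          \<and> ds_eq Z U (all_theories Z U) (2 ^ card Z))
       \<and> (infinite (Z \<union> U) \<longrightarrow> (\<forall>a::'o::wellorder. rs_ge Z U (all_theories Z U) a))"
proof (rule conjI; intro impI allI)
  assume "finite Z \<and> finite U"
  then show "rs_eq Z U (all_theories Z U) (2 ^ card U) \<and> ds_eq Z U (all_theories Z U) (2 ^ card Z)"
    using finite_part by blast
next
  fix a :: "'o::wellorder"
  assume inf: "infinite (Z \<union> U)"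
  obtain sy :: "nat \<Rightarrow> 's" where sy: "inj sy" "range sy \<subseteq> Z \<union> U"
    using infinite_countable_subset[OF inf] by blast
  have "Gset Z U sy [] \<subseteq> all_theories Z U" unfolding Gset_def using th_in_all by auto
  then show "rs_ge Z U (all_theories Z U) a" using infinite_rank[OF sy, of a] by blast
qed

end
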